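(* Let $\Omega\subset\mathbb{R}^N$ ($N=2,3$) be a bounded convex polytope or smooth domain, $s\in(\frac12,1]$, and let $y\in H^s(I;L^2(\Omega))\cap L^2(I;H^{2s}(\Omega))$ be the solution of the state equation $\partial_ty-\Delta y=f$, $y=u$ on $\Sigma_T$, $y(0)=y_0$ (for some data $f\in L^2(I;L^2(\Omega))$, $u\in L^2(I;L^2(\Gamma))$, $y_0\in L^2(\Omega)$). Define the piecewise constant function $g$ by $$g|_{I_m}=\frac{P_k^my-y(t_m)}{k_m}-\frac{P_k^{m-1}y-y(t_{m-1})}{k_m},\quad m=1,\dots,M,\qquad P_k^0y:=y(t_0)=y_0.$$ Then $$\sum_{m=1}^Mk_m^{1-(2s-1)}\|g\|^2_{L^2(I_m;L^2(\Omega))}\le C\|y\|^2_{H^s(I;L^2(\Omega))},$$ with $C$ independent of $k$ and $y$.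
   Context: $\Gamma=\partial\Omega$, $T>0$, $I=(0,T)$, $\Sigma_T=I\times\Gamma$. Time mesh: $0=t_0<\dots<t_M=T$, $I_m=(t_{m-1},t_m]$, $k_m=t_m-t_{m-1}$, $k=\max_mk_m$, with $k/k_m\le C$ for all $m$ and $k_m\le k_{m-1}$ for $m\ge 2$. $P_k^my=\frac1{k_m}\int_{t_{m-1}}^{t_m}y(t)\,dt$ for $m=1,\dots,M$. (Since $s>\frac12$, $y\in C(\bar I;L^2(\Omega))$, so $y(t_m)$ is defined.) *)

theory Defs
  imports "HOL-Analysis.Analysis"
begin

definition L2sq :: "'a::euclidean_space set \<Rightarrow> ('a \<Rightarrow> real) \<Rightarrow> ennreal" where
  "L2sq \<Omega> v = (\<integral>\<^sup>+ x. ennreal ((v x)^2) * indicator \<Omega> x \<partial>lebesgue)"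

definition L2L2sq :: "real set \<Rightarrow> 'a::euclidean_space set \<Rightarrow> (real \<Rightarrow> 'a \<Rightarrow> real) \<Rightarrow> ennreal" where
  "L2L2sq J \<Omega> w = (\<integral>\<^sup>+ t. L2sq \<Omega> (w t) * indicator J t \<partial>lborel)"

definition gagliardo_sq :: "real \<Rightarrow> real set \<Rightarrow> 'a::euclidean_space set \<Rightarrow> (real \<Rightarrow> 'a \<Rightarrow> real) \<Rightarrow> ennreal" where
  "gagliardo_sq s J \<Omega> y =
     (\<integral>\<^sup>+ t. \<integral>\<^sup>+ \<tau>. ennreal (1 / \<bar>t - \<tau>\<bar> powr (1 + 2 * s)) * L2sq \<Omega> (\<lambda>x. y t x - y \<tau> x)
            * indicator J \<tau> * indicator J t \<partial>lborel \<partial>lborel)"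

definition weak_time_deriv :: "real \<Rightarrow> real \<Rightarrow> 'a::euclidean_space set \<Rightarrow> (real \<Rightarrow> 'a \<Rightarrow> real) \<Rightarrow> (real \<Rightarrow> 'a \<Rightarrow> real) \<Rightarrow> bool" where
  "weak_time_deriv a b \<Omega> y w \<longleftrightarrow>
     (\<lambda>(t, x). w t x) \<in> borel_measurable (lborel \<Otimes>\<^sub>M lborel) \<and>
     (\<forall>t\<in>{a..b}. AE x in lebesgue. x \<in> \<Omega> \<longrightarrow> y t x = y a x + (LINT \<tau>:{a..t}|lborel. w \<tau> x))"

text \<open>Squared norm of H^s(I; L2(Omega)), I = (0,T), 0 < s <= 1 (value \<infinity> if y is not in the space).\<close>
definition Hs_sq :: "real \<Rightarrow> real \<Rightarrow> 'a::euclidean_space set \<Rightarrow> (real \<Rightarrow> 'a \<Rightarrow> real) \<Rightarrow> ennreal" where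
  "Hs_sq s T \<Omega> y =
     (if s < 1 then L2L2sq {0<..<T} \<Omega> y + gagliardo_sq s {0<..<T} \<Omega> y
      else L2L2sq {0<..<T} \<Omega> y + (INF w \<in> {w. weak_time_deriv 0 T \<Omega> y w}. L2L2sq {0<..<T} \<Omega> w))"

definition mstep :: "(nat \<Rightarrow> real) \<Rightarrow> nat \<Rightarrow> real" where
  "mstep t m = t m - t (m - 1)"

definition time_mesh :: "real \<Rightarrow> nat \<Rightarrow> (nat \<Rightarrow> real) \<Rightarrow> real \<Rightarrow> bool" where
  "time_mesh T M t \<kappa> \<longleftrightarrow>
     t 0 = 0 \<and> t M = T \<and> (\<forall>m\<in>{1..M}. t (m - 1) < t m) \<and>
     (\<forall>m\<in>{1..M}. Max (mstep t ` {1..M}) / mstep t m \<le> \<kappa>) \<and>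
     (\<forall>m\<in>{2..M}. mstep t m \<le> mstep t (m - 1))"

definition Pk :: "(nat \<Rightarrow> real) \<Rightarrow> (real \<Rightarrow> 'a \<Rightarrow> real) \<Rightarrow> nat \<Rightarrow> 'a \<Rightarrow> real" where
  "Pk t y m x = (if m = 0 then y (t 0) x
                 else (1 / mstep t m) * (LINT \<tau>:{t (m - 1)..t m}|lborel. y \<tau> x))"

definition gk :: "(nat \<Rightarrow> real) \<Rightarrow> (real \<Rightarrow> 'a \<Rightarrow> real) \<Rightarrow> nat \<Rightarrow> 'a \<Rightarrow> real" where
  "gk t y m x = (Pk t y m x - y (t m) x) / mstep t m
               - (Pk t y (m - 1) x - y (t (m - 1)) x) / mstep t m"

end

theory Submission
  imports Defs
begin

lemma abs_LINT_le:
  fixes f :: "real \<Rightarrow> real"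
  assumes [measurable]: "f \<in> borel_measurable lborel" "S \<in> sets lborel"
  shows "ennreal \<bar>LINT \<tau>:S|lborel. f \<tau>\<bar> \<le> (\<integral>\<^sup>+\<tau>. ennreal \<bar>f \<tau>\<bar> * indicator S \<tau> \<partial>lborel)"
proof (cases "set_integrable lborel S f")
  case True
  then have "norm (LINT \<tau>:S|lborel. f \<tau>) \<le> (\<integral>\<^sup>+\<tau>. norm (indicator S \<tau> *\<^sub>R f \<tau>) \<partial>lborel)"
    unfolding set_lebesgue_integral_def set_integrable_def by (rule integral_norm_bound_ennreal)
  also have "\<dots> = (\<integral>\<^sup>+\<tau>. ennreal \<bar>f \<tau>\<bar> * indicator S \<tau> \<partial>lborel)"
    by (intro nn_integral_cong) (auto simp: indicator_def)
  finally show ?thesis by simp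
next
  case False
  then have "(LINT \<tau>:S|lborel. f \<tau>) = 0"
    unfolding set_lebesgue_integral_def set_integrable_def by (rule not_integrable_integral_eq)
  then show ?thesis by simp
qed

lemma CS_interval:
  fixes g :: "real \<Rightarrow> real"
  assumes [measurable]: "g \<in> borel_measurable lborel" and cd: "c \<le> d"
  shows "(\<integral>\<^sup>+\<tau>. ennreal \<bar>g \<tau>\<bar> * indicator {c..d} \<tau> \<partial>lborel)^2
     \<le> ennreal (d - c) * (\<integral>\<^sup>+\<tau>. ennreal ((g \<tau>)^2) * indicator {c..d} \<tau> \<partial>lborel)"
proof -
  have "(\<integral>\<^sup>+\<tau>. (ennreal \<bar>g \<tau>\<bar> * indicator {c..d} \<tau>) * indicator {c..d} \<tau> \<partial>lborel)^2
     \<le> (\<integral>\<^sup>+\<tau>. (ennreal \<bar>g \<tau>\<bar> * indicator {c..d} \<tau>)^2 \<partial>lborel) * (\<integral>\<^sup>+\<tau>. (indicator {c..d} \<tau>)^2 \<partial>lborel)"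
    by (rule Cauchy_Schwarz_nn_integral) auto
  moreover have "(\<integral>\<^sup>+\<tau>. (ennreal \<bar>g \<tau>\<bar> * indicator {c..d} \<tau>) * indicator {c..d} \<tau> \<partial>lborel)
     = (\<integral>\<^sup>+\<tau>. ennreal \<bar>g \<tau>\<bar> * indicator {c..d} \<tau> \<partial>lborel)"
    by (intro nn_integral_cong) (auto simp: indicator_def)
  moreover have "(\<integral>\<^sup>+\<tau>. (ennreal \<bar>g \<tau>\<bar> * indicator {c..d} \<tau>)^2 \<partial>lborel)
     = (\<integral>\<^sup>+\<tau>. ennreal ((g \<tau>)^2) * indicator {c..d} \<tau> \<partial>lborel)"
    by (intro nn_integral_cong) (auto simp: indicator_def ennreal_power)
  moreover have "(\<integral>\<^sup>+\<tau>. (indicator {c..d} \<tau>)^2 \<partial>lborel) = ennreal (d - c)"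
  proof -
    have "(\<integral>\<^sup>+\<tau>. (indicator {c..d} \<tau>)^2 \<partial>lborel) = (\<integral>\<^sup>+\<tau>. indicator {c..d} \<tau> \<partial>lborel)"
      by (intro nn_integral_cong) (auto simp: indicator_def)
    also have "\<dots> = ennreal (d - c)" using cd by simp
    finally show ?thesis .
  qed
  ultimately show ?thesis by (simp add: mult.commute)
qed

lemma set_integrable_const_Icc: "set_integrable lborel {c..d::real} (\<lambda>_. r::real)"
  by (metis (no_types, lifting) ext borel_integrable_atLeastAtMost'
    continuous_on_const set_integrable_def)

lemma jensen_avg:
  fixes f :: "real \<Rightarrow> real"
  assumes [measurable]: "f \<in> borel_measurable lborel" and cd: "c < d"
    and fi: "set_integrable lborel {c..d} f"
  shows "ennreal (((1 / (d - c)) * (LINT \<tau>:{c..d}|lborel. f \<tau>) - r)^2)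
     \<le> ennreal (1 / (d - c)) * (\<integral>\<^sup>+\<tau>. ennreal ((f \<tau> - r)^2) * indicator {c..d} \<tau> \<partial>lborel)"
proof -
  define J where "J = (LINT \<tau>:{c..d}|lborel. f \<tau> - r)"
  have ci: "set_integrable lborel {c..d} (\<lambda>_. r)" by (rule set_integrable_const_Icc)
  have "(LINT \<tau>:{c..d}|lborel. f \<tau> - r) = (LINT \<tau>:{c..d}|lborel. f \<tau>) - (LINT \<tau>:{c..d}|lborel. r)"
    using fi ci by simp
  also have "(LINT \<tau>:{c..d}|lborel. r) = (d - c) * r"
    using cd by (subst set_integral_const) auto
  finally have eq: "(1 / (d - c)) * (LINT \<tau>:{c..d}|lborel. f \<tau>) - r = (1 / (d - c)) * J"
    unfolding J_def using cd by (simp add: field_simps)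
  have "ennreal \<bar>J\<bar> \<le> (\<integral>\<^sup>+\<tau>. ennreal \<bar>f \<tau> - r\<bar> * indicator {c..d} \<tau> \<partial>lborel)"
    unfolding J_def by (rule abs_LINT_le) auto
  then have "(ennreal \<bar>J\<bar>)^2 \<le> (\<integral>\<^sup>+\<tau>. ennreal \<bar>f \<tau> - r\<bar> * indicator {c..d} \<tau> \<partial>lborel)^2"
    by (rule power_mono) simp
  also have "\<dots> \<le> ennreal (d - c) * (\<integral>\<^sup>+\<tau>. ennreal ((f \<tau> - r)^2) * indicator {c..d} \<tau> \<partial>lborel)"
    using cd by (intro CS_interval) auto
  finally have J2: "ennreal (J^2) \<le> ennreal (d - c) * (\<integral>\<^sup>+\<tau>. ennreal ((f \<tau> - r)^2) * indicator {c..d} \<tau> \<partial>lborel)"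
    by (simp add: ennreal_power)
  have "ennreal (((1 / (d - c)) * J)^2) = ennreal ((1 / (d - c))^2) * ennreal (J^2)"
    by (subst power_mult_distrib, rule ennreal_mult) auto
  also have "\<dots> \<le> ennreal ((1 / (d - c))^2) * (ennreal (d - c) * (\<integral>\<^sup>+\<tau>. ennreal ((f \<tau> - r)^2) * indicator {c..d} \<tau> \<partial>lborel))"
    by (rule mult_left_mono[OF J2]) simp
  also have "\<dots> = ennreal ((1 / (d - c))^2 * (d - c)) * (\<integral>\<^sup>+\<tau>. ennreal ((f \<tau> - r)^2) * indicator {c..d} \<tau> \<partial>lborel)"
    using cd by (simp add: ennreal_mult mult.assoc)
  also have "(1 / (d - c))^2 * (d - c) = 1 / (d - c)"
    using cd by (simp add: power2_eq_square)
  finally show ?thesis using eq by simp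
qed

lemma set_integrable_subint:
  fixes f :: "real \<Rightarrow> real"
  assumes "set_integrable lborel {c..d} f" "c \<le> c'" "d' \<le> d"
  shows "set_integrable lborel {c'..d'} f"
  by (rule set_integrable_subset[OF assms(1)]) (use assms in auto)

lemma dyadic_step_raw:
  fixes f :: "real \<Rightarrow> real"
  assumes [measurable]: "f \<in> borel_measurable lborel" and cc: "c \<le> c'" and cd: "c' < d"
    and fi: "set_integrable lborel {c..d} f"
  shows "ennreal (((1 / (d - c')) * (LINT \<tau>:{c'..d}|lborel. f \<tau>) - (1 / (d - c)) * (LINT \<tau>:{c..d}|lborel. f \<tau>))^2)
     \<le> ennreal (1 / (d - c')) * ennreal (1 / (d - c)) * (\<integral>\<^sup>+t. (\<integral>\<^sup>+\<tau>. ennreal ((f t - f \<tau>)^2) * indicator {c..d} \<tau> \<partial>lborel) * indicator {c'..d} t \<partial>lborel)"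
proof -
  define A where "A = (1 / (d - c)) * (LINT \<tau>:{c..d}|lborel. f \<tau>)"
  have fi': "set_integrable lborel {c'..d} f" using set_integrable_subint[OF fi cc] by simp
  have "ennreal (((1 / (d - c')) * (LINT \<tau>:{c'..d}|lborel. f \<tau>) - A)^2)
     \<le> ennreal (1 / (d - c')) * (\<integral>\<^sup>+t. ennreal ((f t - A)^2) * indicator {c'..d} t \<partial>lborel)"
    using cd fi' by (intro jensen_avg) auto
  also have "(\<integral>\<^sup>+t. ennreal ((f t - A)^2) * indicator {c'..d} t \<partial>lborel)
     \<le> (\<integral>\<^sup>+t. (ennreal (1 / (d - c)) * (\<integral>\<^sup>+\<tau>. ennreal ((f t - f \<tau>)^2) * indicator {c..d} \<tau> \<partial>lborel)) * indicator {c'..d} t \<partial>lborel)"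
  proof (intro nn_integral_mono mult_right_mono)
    fix t
    have "ennreal ((f t - A)^2) = ennreal ((A - f t)^2)" by (simp add: power2_commute)
    also have "\<dots> \<le> ennreal (1 / (d - c)) * (\<integral>\<^sup>+\<tau>. ennreal ((f \<tau> - f t)^2) * indicator {c..d} \<tau> \<partial>lborel)"
      unfolding A_def using cc cd fi by (intro jensen_avg) auto
    also have "(\<integral>\<^sup>+\<tau>. ennreal ((f \<tau> - f t)^2) * indicator {c..d} \<tau> \<partial>lborel) = (\<integral>\<^sup>+\<tau>. ennreal ((f t - f \<tau>)^2) * indicator {c..d} \<tau> \<partial>lborel)"
      by (simp add: power2_commute)
    finally show "ennreal ((f t - A)^2) \<le> ennreal (1 / (d - c)) * (\<integral>\<^sup>+\<tau>. ennreal ((f t - f \<tau>)^2) * indicator {c..d} \<tau> \<partial>lborel)" .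
  qed simp
  also have "\<dots> = ennreal (1 / (d - c)) * (\<integral>\<^sup>+t. (\<integral>\<^sup>+\<tau>. ennreal ((f t - f \<tau>)^2) * indicator {c..d} \<tau> \<partial>lborel) * indicator {c'..d} t \<partial>lborel)"
    by (subst nn_integral_cmult[symmetric]) (auto simp: mult.assoc)
  finally show ?thesis unfolding A_def by (simp add: mult.assoc mult_left_mono)
qed

lemma ennreal_mult3: "0 \<le> a \<Longrightarrow> 0 \<le> b \<Longrightarrow> 0 \<le> c \<Longrightarrow> ennreal (a * b * c) = ennreal a * (ennreal b * ennreal c)"
  by (simp add: ennreal_mult mult.assoc)

lemma weight_pt:
  fixes t \<tau> c d p v :: real
  assumes "c \<le> t" "t \<le> d" "c \<le> \<tau>" "\<tau> \<le> d" "0 < p" "t = \<tau> \<Longrightarrow> v = 0"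
  shows "ennreal (v^2) \<le> ennreal ((d - c) powr p) * (ennreal (1 / \<bar>t - \<tau>\<bar> powr p) * ennreal (v^2))"
proof (cases "t = \<tau>")
  case True then show ?thesis using assms by simp
next
  case False
  then have pos: "0 < \<bar>t - \<tau>\<bar>" by simp
  have le: "\<bar>t - \<tau>\<bar> \<le> d - c" using assms by auto
  have "\<bar>t - \<tau>\<bar> powr p \<le> (d - c) powr p" using pos le assms(5) by (intro powr_mono2) auto
  then have "1 \<le> (d - c) powr p * (1 / \<bar>t - \<tau>\<bar> powr p)" using pos by (simp add: field_simps)
  then have "1 * v^2 \<le> ((d - c) powr p * (1 / \<bar>t - \<tau>\<bar> powr p)) * v^2"
    by (rule mult_right_mono) simp
  then have "v^2 \<le> ((d - c) powr p * (1 / \<bar>t - \<tau>\<bar> powr p)) * v^2" by simp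
  then have "ennreal (v^2) \<le> ennreal ((d - c) powr p * (1 / \<bar>t - \<tau>\<bar> powr p) * v^2)"
    by (rule ennreal_leI)
  also have "\<dots> = ennreal ((d - c) powr p) * (ennreal (1 / \<bar>t - \<tau>\<bar> powr p) * ennreal (v^2))"
    by (rule ennreal_mult3) auto
  finally show ?thesis .
qed

lemma dyadic_step:
  fixes f :: "real \<Rightarrow> real"
  assumes [measurable]: "f \<in> borel_measurable lborel" and cc: "c \<le> c'" and cd: "c' < d"
    and fi: "set_integrable lborel {c..d} f" and p: "0 < p"
  shows "ennreal (((1 / (d - c')) * (LINT \<tau>:{c'..d}|lborel. f \<tau>) - (1 / (d - c)) * (LINT \<tau>:{c..d}|lborel. f \<tau>))^2)
     \<le> ennreal (1 / (d - c')) * ennreal (1 / (d - c)) * ennreal ((d - c) powr p) *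
       (\<integral>\<^sup>+t. \<integral>\<^sup>+\<tau>. ennreal (1 / \<bar>t - \<tau>\<bar> powr p) * ennreal ((f t - f \<tau>)^2) * indicator {c..d} \<tau> * indicator {c..d} t \<partial>lborel \<partial>lborel)"
proof -
  have "(\<integral>\<^sup>+t. (\<integral>\<^sup>+\<tau>. ennreal ((f t - f \<tau>)^2) * indicator {c..d} \<tau> \<partial>lborel) * indicator {c'..d} t \<partial>lborel)
     \<le> (\<integral>\<^sup>+t. (\<integral>\<^sup>+\<tau>. ennreal ((f t - f \<tau>)^2) * indicator {c..d} \<tau> \<partial>lborel) * indicator {c..d} t \<partial>lborel)"
    using cc by (intro nn_integral_mono mult_left_mono) (auto simp: indicator_def)
  also have "\<dots> = (\<integral>\<^sup>+t. \<integral>\<^sup>+\<tau>. ennreal ((f t - f \<tau>)^2) * indicator {c..d} \<tau> * indicator {c..d} t \<partial>lborel \<partial>lborel)"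
    by (intro nn_integral_cong, subst nn_integral_multc) auto
  also have "\<dots> \<le> (\<integral>\<^sup>+t. \<integral>\<^sup>+\<tau>. ennreal ((d - c) powr p) * (ennreal (1 / \<bar>t - \<tau>\<bar> powr p) * ennreal ((f t - f \<tau>)^2) * indicator {c..d} \<tau> * indicator {c..d} t) \<partial>lborel \<partial>lborel)"
  proof (intro nn_integral_mono)
    fix t \<tau>
    show "ennreal ((f t - f \<tau>)^2) * indicator {c..d} \<tau> * indicator {c..d} t
      \<le> ennreal ((d - c) powr p) * (ennreal (1 / \<bar>t - \<tau>\<bar> powr p) * ennreal ((f t - f \<tau>)^2) * indicator {c..d} \<tau> * indicator {c..d} t)"
    proof (cases "t \<in> {c..d} \<and> \<tau> \<in> {c..d}")
      case True
      then have "ennreal ((f t - f \<tau>)^2) \<le> ennreal ((d - c) powr p) * (ennreal (1 / \<bar>t - \<tau>\<bar> powr p) * ennreal ((f t - f \<tau>)^2))"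
        using p by (intro weight_pt) auto
      then show ?thesis using True by (simp add: mult.assoc)
    qed auto
  qed
  also have "\<dots> = ennreal ((d - c) powr p) * (\<integral>\<^sup>+t. \<integral>\<^sup>+\<tau>. ennreal (1 / \<bar>t - \<tau>\<bar> powr p) * ennreal ((f t - f \<tau>)^2) * indicator {c..d} \<tau> * indicator {c..d} t \<partial>lborel \<partial>lborel)"
  proof -
    define F where "F = (\<lambda>t \<tau>. ennreal (1 / \<bar>t - \<tau>\<bar> powr p) * ennreal ((f t - f \<tau>)^2) * indicator {c..d} \<tau> * (indicator {c..d} t :: ennreal))"
    have Fm: "(\<lambda>(t, \<tau>). F t \<tau>) \<in> borel_measurable (lborel \<Otimes>\<^sub>M lborel)"
      unfolding F_def by measurable
    have Fm1: "F t \<in> borel_measurable lborel" for t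
      using measurable_Pair2[OF Fm, of t] by simp
    have "(\<integral>\<^sup>+t. \<integral>\<^sup>+\<tau>. ennreal ((d - c) powr p) * F t \<tau> \<partial>lborel \<partial>lborel) = (\<integral>\<^sup>+t. ennreal ((d - c) powr p) * \<integral>\<^sup>+\<tau>. F t \<tau> \<partial>lborel \<partial>lborel)"
      by (intro nn_integral_cong nn_integral_cmult Fm1)
    also have "\<dots> = ennreal ((d - c) powr p) * (\<integral>\<^sup>+t. \<integral>\<^sup>+\<tau>. F t \<tau> \<partial>lborel \<partial>lborel)"
      by (intro nn_integral_cmult lborel.borel_measurable_nn_integral) (simp add: Fm)
    finally show ?thesis unfolding F_def .
  qed
  finally have X: "(\<integral>\<^sup>+t. (\<integral>\<^sup>+\<tau>. ennreal ((f t - f \<tau>)^2) * indicator {c..d} \<tau> \<partial>lborel) * indicator {c'..d} t \<partial>lborel)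
     \<le> ennreal ((d - c) powr p) * (\<integral>\<^sup>+t. \<integral>\<^sup>+\<tau>. ennreal (1 / \<bar>t - \<tau>\<bar> powr p) * ennreal ((f t - f \<tau>)^2) * indicator {c..d} \<tau> * indicator {c..d} t \<partial>lborel \<partial>lborel)" .
  show ?thesis
    using order.trans[OF dyadic_step_raw[OF assms(1) cc cd fi] mult_left_mono[OF X]]
    by (simp add: mult.assoc)
qed

lemma powr_pow_base: "0 \<le> x \<Longrightarrow> (x^j) powr e = (x powr e)^j" for x e :: real
  by (induction j) (auto simp: powr_mult)

lemma geom_le: "0 \<le> q \<Longrightarrow> q < 1 \<Longrightarrow> (\<Sum>j<n. q^j) \<le> 1 / (1 - q)" for q :: real
  by (subst sum_gp_strict) (auto simp: divide_simps)

lemma sq_ineq: "(u - v)^2 \<le> 2 * u^2 + 2 * v^2" for u v :: real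
proof -
  have "0 \<le> (u + v)^2" by simp
  then show ?thesis by (simp add: power2_eq_square algebra_simps)
qed

lemma telescope_bound:
  fixes a :: "nat \<Rightarrow> real" and q z :: real
  assumes q: "0 < q" "q < 1"
  shows "(a 0 - z)^2 \<le> 2 * (a n - z)^2 + (2 / (1 - q)) * (\<Sum>j<n. (a (Suc j) - a j)^2 / q^j)"
proof -
  define v where "v = (\<Sum>j<n. a (Suc j) - a j)"
  have tel: "a 0 - z = (a n - z) - v" unfolding v_def by (simp add: sum_lessThan_telescope)
  have "v = (\<Sum>j<n. sqrt (q^j) * ((a (Suc j) - a j) / sqrt (q^j)))"
    unfolding v_def using q by (intro sum.cong) auto
  then have "v^2 \<le> (\<Sum>j<n. (sqrt (q^j))^2) * (\<Sum>j<n. ((a (Suc j) - a j) / sqrt (q^j))^2)"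
    by (simp only: Cauchy_Schwarz_ineq_sum)
  also have "\<dots> = (\<Sum>j<n. q^j) * (\<Sum>j<n. (a (Suc j) - a j)^2 / q^j)"
    using q by (simp add: power_divide)
  also have "\<dots> \<le> (1 / (1 - q)) * (\<Sum>j<n. (a (Suc j) - a j)^2 / q^j)"
    using q by (intro mult_right_mono geom_le sum_nonneg) auto
  finally have v2: "v^2 \<le> (1 / (1 - q)) * (\<Sum>j<n. (a (Suc j) - a j)^2 / q^j)" .
  have "(a 0 - z)^2 \<le> 2 * (a n - z)^2 + 2 * v^2"
    unfolding tel using sq_ineq[of "a n - z" v] by simp
  then show ?thesis using v2 by simp
qed

definition Gag :: "real \<Rightarrow> real \<Rightarrow> real \<Rightarrow> 'a::euclidean_space set \<Rightarrow> (real \<Rightarrow> 'a \<Rightarrow> real) \<Rightarrow> ennreal" where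
  "Gag s a b \<Omega> y = (\<integral>\<^sup>+t. \<integral>\<^sup>+\<tau>. ennreal (1 / \<bar>t - \<tau>\<bar> powr (1 + 2 * s)) *
      (\<integral>\<^sup>+x. ennreal ((y t x - y \<tau> x)^2) * indicator \<Omega> x \<partial>lborel) * indicator {a..b} \<tau> * indicator {a..b} t \<partial>lborel \<partial>lborel)"

lemma tonelli1:
  fixes F :: "real \<Rightarrow> 'a::euclidean_space \<Rightarrow> ennreal"
  assumes [measurable]: "(\<lambda>(\<tau>, x). F \<tau> x) \<in> borel_measurable (lborel \<Otimes>\<^sub>M lborel)"
  shows "(\<integral>\<^sup>+x. (\<integral>\<^sup>+\<tau>. F \<tau> x \<partial>lborel) \<partial>lborel) = (\<integral>\<^sup>+\<tau>. (\<integral>\<^sup>+x. F \<tau> x \<partial>lborel) \<partial>lborel)"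
  by (rule lborel_pair.Fubini') simp

lemma nn_multc2:
  fixes F :: "real \<Rightarrow> real \<Rightarrow> ennreal"
  assumes Fm: "(\<lambda>(t, \<tau>). F t \<tau>) \<in> borel_measurable (lborel \<Otimes>\<^sub>M lborel)"
  shows "(\<integral>\<^sup>+t. \<integral>\<^sup>+\<tau>. F t \<tau> \<partial>lborel \<partial>lborel) * c = (\<integral>\<^sup>+t. \<integral>\<^sup>+\<tau>. F t \<tau> * c \<partial>lborel \<partial>lborel)"
proof -
  have m1: "F t \<in> borel_measurable lborel" for t using measurable_Pair2[OF Fm, of t] by simp
  have m2: "(\<lambda>t. \<integral>\<^sup>+\<tau>. F t \<tau> \<partial>lborel) \<in> borel_measurable lborel"
    by (rule lborel.borel_measurable_nn_integral) (simp add: Fm)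
  show ?thesis
    by (subst nn_integral_multc[OF m2, symmetric]) (intro nn_integral_cong nn_integral_multc[symmetric] m1)
qed

lemma tonelli_gag:
  fixes y :: "real \<Rightarrow> 'a::euclidean_space \<Rightarrow> real"
  assumes [measurable]: "(\<lambda>(\<tau>, x). y \<tau> x) \<in> borel_measurable (lborel \<Otimes>\<^sub>M lborel)" "\<Omega> \<in> sets lborel"
  shows "(\<integral>\<^sup>+x. (\<integral>\<^sup>+t. \<integral>\<^sup>+\<tau>. ennreal (1 / \<bar>t - \<tau>\<bar> powr (1 + 2 * s)) * ennreal ((y t x - y \<tau> x)^2) * indicator {a..b} \<tau> * indicator {a..b} t \<partial>lborel \<partial>lborel) * indicator \<Omega> x \<partial>lborel)
    = Gag s a b \<Omega> y"
proof -
  define H where "H = (\<lambda>t \<tau> x. ennreal (1 / \<bar>t - \<tau>\<bar> powr (1 + 2 * s)) * ennreal ((y t x - y \<tau> x)^2) * indicator {a..b} \<tau> * indicator {a..b} t * (indicator \<Omega> x :: ennreal))"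
  have Hm1: "(\<lambda>(\<tau>, x). H t \<tau> x) \<in> borel_measurable (lborel \<Otimes>\<^sub>M lborel)" for t
    unfolding H_def by measurable
  have Hm2: "(\<lambda>(t, x). \<integral>\<^sup>+\<tau>. H t \<tau> x \<partial>lborel) \<in> borel_measurable (lborel \<Otimes>\<^sub>M lborel)"
    unfolding H_def by measurable
  have "(\<integral>\<^sup>+x. (\<integral>\<^sup>+t. \<integral>\<^sup>+\<tau>. ennreal (1 / \<bar>t - \<tau>\<bar> powr (1 + 2 * s)) * ennreal ((y t x - y \<tau> x)^2) * indicator {a..b} \<tau> * indicator {a..b} t \<partial>lborel \<partial>lborel) * indicator \<Omega> x \<partial>lborel)
     = (\<integral>\<^sup>+x. \<integral>\<^sup>+t. \<integral>\<^sup>+\<tau>. H t \<tau> x \<partial>lborel \<partial>lborel \<partial>lborel)"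
    unfolding H_def
    by (intro nn_integral_cong nn_multc2) measurable
  also have "\<dots> = (\<integral>\<^sup>+t. \<integral>\<^sup>+x. \<integral>\<^sup>+\<tau>. H t \<tau> x \<partial>lborel \<partial>lborel \<partial>lborel)"
    using tonelli1[OF Hm2] .
  also have "\<dots> = (\<integral>\<^sup>+t. \<integral>\<^sup>+\<tau>. \<integral>\<^sup>+x. H t \<tau> x \<partial>lborel \<partial>lborel \<partial>lborel)"
    by (intro nn_integral_cong tonelli1[OF Hm1])
  also have "\<dots> = Gag s a b \<Omega> y"
    unfolding Gag_def
  proof (intro nn_integral_cong)
    fix t \<tau>
    have "(\<integral>\<^sup>+x. H t \<tau> x \<partial>lborel) = (\<integral>\<^sup>+x. (ennreal (1 / \<bar>t - \<tau>\<bar> powr (1 + 2 * s)) * indicator {a..b} \<tau> * indicator {a..b} t) * (ennreal ((y t x - y \<tau> x)^2) * indicator \<Omega> x) \<partial>lborel)"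
      unfolding H_def by (intro nn_integral_cong) (simp add: ac_simps)
    also have "\<dots> = (ennreal (1 / \<bar>t - \<tau>\<bar> powr (1 + 2 * s)) * indicator {a..b} \<tau> * indicator {a..b} t) * (\<integral>\<^sup>+x. ennreal ((y t x - y \<tau> x)^2) * indicator \<Omega> x \<partial>lborel)"
      by (rule nn_integral_cmult) measurable
    finally show "(\<integral>\<^sup>+x. H t \<tau> x \<partial>lborel) = ennreal (1 / \<bar>t - \<tau>\<bar> powr (1 + 2 * s)) * (\<integral>\<^sup>+x. ennreal ((y t x - y \<tau> x)^2) * indicator \<Omega> x \<partial>lborel) * indicator {a..b} \<tau> * indicator {a..b} t"
      by (simp add: ac_simps)
  qed
  finally show ?thesis .
qed

lemma ennreal_mult3': "0 \<le> a \<Longrightarrow> 0 \<le> b \<Longrightarrow> 0 \<le> c \<Longrightarrow> ennreal a * ennreal b * ennreal c = ennreal (a * b * c)"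
  by (simp add: ennreal_mult)

lemma const_ident:
  fixes x s :: real assumes "0 < x"
  shows "(1 / (x / 2)) * (1 / x) * x powr (1 + 2 * s) = 2 * x powr (2 * s - 1)"
proof -
  have "x powr (1 + 2 * s) = x powr 2 * x powr (2 * s - 1)"
    by (subst powr_add[symmetric]) simp
  also have "x powr 2 = x^2" using assms by (simp add: powr_numeral)
  finally show ?thesis using assms by (simp add: power2_eq_square field_simps)
qed

lemma W_mono:
  fixes f :: "real \<Rightarrow> real"
  assumes "a \<le> c"
  shows "(\<integral>\<^sup>+t. \<integral>\<^sup>+\<tau>. ennreal (1 / \<bar>t - \<tau>\<bar> powr p) * ennreal ((f t - f \<tau>)^2) * indicator {c..d} \<tau> * indicator {c..d} t \<partial>lborel \<partial>lborel)
    \<le> (\<integral>\<^sup>+t. \<integral>\<^sup>+\<tau>. ennreal (1 / \<bar>t - \<tau>\<bar> powr p) * ennreal ((f t - f \<tau>)^2) * indicator {a..d} \<tau> * indicator {a..d} t \<partial>lborel \<partial>lborel)"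
  using assms by (intro nn_integral_mono) (auto simp: indicator_def)

lemma step_int:
  fixes y :: "real \<Rightarrow> 'a::euclidean_space \<Rightarrow> real"
  assumes Ym[measurable]: "(\<lambda>(\<tau>, x). y \<tau> x) \<in> borel_measurable (lborel \<Otimes>\<^sub>M lborel)"
    and Om[measurable]: "\<Omega> \<in> sets lborel"
    and ac: "a \<le> c" and cb: "c < b" and s: "0 < s"
    and good: "AE x in lborel. x \<in> \<Omega> \<longrightarrow> set_integrable lborel {a..b} (\<lambda>\<tau>. y \<tau> x)"
  shows "(\<integral>\<^sup>+x. ennreal (((1 / (b - (c + b) / 2)) * (LINT \<tau>:{(c + b) / 2..b}|lborel. y \<tau> x) - (1 / (b - c)) * (LINT \<tau>:{c..b}|lborel. y \<tau> x))^2) * indicator \<Omega> x \<partial>lborel)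
    \<le> ennreal (2 * (b - c) powr (2 * s - 1)) * Gag s a b \<Omega> y"
proof -
  define W where "W = (\<lambda>x. \<integral>\<^sup>+t. \<integral>\<^sup>+\<tau>. ennreal (1 / \<bar>t - \<tau>\<bar> powr (1 + 2 * s)) * ennreal ((y t x - y \<tau> x)^2) * indicator {a..b} \<tau> * indicator {a..b} t \<partial>lborel \<partial>lborel)"
  have Wm: "(\<lambda>x. W x * indicator \<Omega> x) \<in> borel_measurable lborel" unfolding W_def by measurable
  have ym: "(\<lambda>\<tau>. y \<tau> x) \<in> borel_measurable lborel" for x by measurable
  have K: "ennreal (1 / (b - (c + b) / 2)) * ennreal (1 / (b - c)) * ennreal ((b - c) powr (1 + 2 * s)) = ennreal (2 * (b - c) powr (2 * s - 1))"
  proof -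
    have e: "b - (c + b) / 2 = (b - c) / 2" by (simp add: field_simps)
    have "ennreal (1 / (b - (c + b) / 2)) * ennreal (1 / (b - c)) * ennreal ((b - c) powr (1 + 2 * s))
       = ennreal ((1 / ((b - c) / 2)) * (1 / (b - c)) * (b - c) powr (1 + 2 * s))"
      unfolding e using cb by (subst ennreal_mult3') auto
    also have "\<dots> = ennreal (2 * (b - c) powr (2 * s - 1))" using cb by (subst const_ident) auto
    finally show ?thesis .
  qed
  have "(\<integral>\<^sup>+x. ennreal (((1 / (b - (c + b) / 2)) * (LINT \<tau>:{(c + b) / 2..b}|lborel. y \<tau> x) - (1 / (b - c)) * (LINT \<tau>:{c..b}|lborel. y \<tau> x))^2) * indicator \<Omega> x \<partial>lborel)
     \<le> (\<integral>\<^sup>+x. ennreal (2 * (b - c) powr (2 * s - 1)) * W x * indicator \<Omega> x \<partial>lborel)"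
  proof (rule nn_integral_mono_AE)
    show "AE x in lborel. ennreal (((1 / (b - (c + b) / 2)) * (LINT \<tau>:{(c + b) / 2..b}|lborel. y \<tau> x) - (1 / (b - c)) * (LINT \<tau>:{c..b}|lborel. y \<tau> x))^2) * indicator \<Omega> x
       \<le> ennreal (2 * (b - c) powr (2 * s - 1)) * W x * indicator \<Omega> x"
      using good
    proof eventually_elim
      case (elim x)
      show ?case
      proof (cases "x \<in> \<Omega>")
        case True
        then have fi: "set_integrable lborel {c..b} (\<lambda>\<tau>. y \<tau> x)"
          using elim set_integrable_subint[of a b _ c b] ac by auto
        have "ennreal (((1 / (b - (c + b) / 2)) * (LINT \<tau>:{(c + b) / 2..b}|lborel. y \<tau> x) - (1 / (b - c)) * (LINT \<tau>:{c..b}|lborel. y \<tau> x))^2)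
          \<le> ennreal (1 / (b - (c + b) / 2)) * ennreal (1 / (b - c)) * ennreal ((b - c) powr (1 + 2 * s)) *
       (\<integral>\<^sup>+t. \<integral>\<^sup>+\<tau>. ennreal (1 / \<bar>t - \<tau>\<bar> powr (1 + 2 * s)) * ennreal ((y t x - y \<tau> x)^2) * indicator {c..b} \<tau> * indicator {c..b} t \<partial>lborel \<partial>lborel)"
          using cb s by (intro dyadic_step[OF ym _ _ fi]) auto
        also have "\<dots> \<le> ennreal (2 * (b - c) powr (2 * s - 1)) * W x"
          unfolding K W_def by (intro mult_left_mono W_mono ac) simp
        finally show ?thesis using True by simp
      qed simp
    qed
  qed
  also have "\<dots> = ennreal (2 * (b - c) powr (2 * s - 1)) * (\<integral>\<^sup>+x. W x * indicator \<Omega> x \<partial>lborel)"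
    using Wm by (subst nn_integral_cmult[symmetric]) (auto simp: mult.assoc)
  also have "(\<integral>\<^sup>+x. W x * indicator \<Omega> x \<partial>lborel) = Gag s a b \<Omega> y"
    unfolding W_def by (rule tonelli_gag[OF Ym Om])
  finally show ?thesis .
qed

lemma cont_step:
  fixes y :: "real \<Rightarrow> 'a::euclidean_space \<Rightarrow> real"
  assumes Ym[measurable]: "(\<lambda>(\<tau>, x). y \<tau> x) \<in> borel_measurable (lborel \<Otimes>\<^sub>M lborel)"
    and Om[measurable]: "\<Omega> \<in> sets lborel"
    and cb: "c < b" and e: "0 \<le> \<epsilon>"
    and good: "AE x in lborel. x \<in> \<Omega> \<longrightarrow> set_integrable lborel {c..b} (\<lambda>\<tau>. y \<tau> x)"
    and bnd: "\<forall>\<tau>\<in>{c..b}. (\<integral>\<^sup>+x. ennreal ((y \<tau> x - y b x)^2) * indicator \<Omega> x \<partial>lborel) \<le> ennreal \<epsilon>"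
  shows "(\<integral>\<^sup>+x. ennreal (((1 / (b - c)) * (LINT \<tau>:{c..b}|lborel. y \<tau> x) - y b x)^2) * indicator \<Omega> x \<partial>lborel) \<le> ennreal \<epsilon>"
proof -
  define F where "F = (\<lambda>\<tau> x. ennreal ((y \<tau> x - y b x)^2) * indicator {c..b} \<tau> * (indicator \<Omega> x :: ennreal))"
  have Fm: "(\<lambda>(\<tau>, x). F \<tau> x) \<in> borel_measurable (lborel \<Otimes>\<^sub>M lborel)" unfolding F_def by measurable
  have ym: "(\<lambda>\<tau>. y \<tau> x) \<in> borel_measurable lborel" for x by measurable
  have "(\<integral>\<^sup>+x. ennreal (((1 / (b - c)) * (LINT \<tau>:{c..b}|lborel. y \<tau> x) - y b x)^2) * indicator \<Omega> x \<partial>lborel)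
     \<le> (\<integral>\<^sup>+x. ennreal (1 / (b - c)) * (\<integral>\<^sup>+\<tau>. F \<tau> x \<partial>lborel) \<partial>lborel)"
  proof (rule nn_integral_mono_AE)
    show "AE x in lborel. ennreal (((1 / (b - c)) * (LINT \<tau>:{c..b}|lborel. y \<tau> x) - y b x)^2) * indicator \<Omega> x
       \<le> ennreal (1 / (b - c)) * (\<integral>\<^sup>+\<tau>. F \<tau> x \<partial>lborel)"
      using good
    proof eventually_elim
      case (elim x)
      show ?case
      proof (cases "x \<in> \<Omega>")
        case True
        have "ennreal (((1 / (b - c)) * (LINT \<tau>:{c..b}|lborel. y \<tau> x) - y b x)^2)
           \<le> ennreal (1 / (b - c)) * (\<integral>\<^sup>+\<tau>. ennreal ((y \<tau> x - y b x)^2) * indicator {c..b} \<tau> \<partial>lborel)"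
          using True elim cb by (intro jensen_avg ym) auto
        also have "(\<integral>\<^sup>+\<tau>. ennreal ((y \<tau> x - y b x)^2) * indicator {c..b} \<tau> \<partial>lborel) = (\<integral>\<^sup>+\<tau>. F \<tau> x \<partial>lborel)"
          unfolding F_def using True by simp
        finally show ?thesis using True by simp
      qed (simp add: F_def)
    qed
  qed
  also have "\<dots> = ennreal (1 / (b - c)) * (\<integral>\<^sup>+x. (\<integral>\<^sup>+\<tau>. F \<tau> x \<partial>lborel) \<partial>lborel)"
    by (rule nn_integral_cmult) (unfold F_def, measurable)
  also have "(\<integral>\<^sup>+x. (\<integral>\<^sup>+\<tau>. F \<tau> x \<partial>lborel) \<partial>lborel) = (\<integral>\<^sup>+\<tau>. (\<integral>\<^sup>+x. F \<tau> x \<partial>lborel) \<partial>lborel)"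
    by (rule tonelli1[OF Fm])
  also have "\<dots> \<le> (\<integral>\<^sup>+\<tau>. ennreal \<epsilon> * indicator {c..b} \<tau> \<partial>lborel)"
  proof (intro nn_integral_mono)
    fix \<tau>
    show "(\<integral>\<^sup>+x. F \<tau> x \<partial>lborel) \<le> ennreal \<epsilon> * indicator {c..b} \<tau>"
    proof (cases "\<tau> \<in> {c..b}")
      case True
      then have "(\<integral>\<^sup>+x. F \<tau> x \<partial>lborel) = (\<integral>\<^sup>+x. ennreal ((y \<tau> x - y b x)^2) * indicator \<Omega> x \<partial>lborel)"
        unfolding F_def by simp
      then show ?thesis using bnd True by simp
    qed (simp add: F_def)
  qed
  also have "\<dots> = ennreal \<epsilon> * ennreal (b - c)"
    using cb by (subst nn_integral_cmult) auto
  finally have "(\<integral>\<^sup>+x. ennreal (((1 / (b - c)) * (LINT \<tau>:{c..b}|lborel. y \<tau> x) - y b x)^2) * indicator \<Omega> x \<partial>lborel)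
     \<le> ennreal (1 / (b - c)) * (ennreal \<epsilon> * ennreal (b - c))" by (simp add: mult_left_mono)
  also have "\<dots> = ennreal \<epsilon>"
    using cb e by (simp add: ennreal_mult[symmetric])
  finally show ?thesis .
qed

definition qf :: "real \<Rightarrow> real" where "qf s = sqrt ((1/2) powr (2 * s - 1))"
definition Cf :: "real \<Rightarrow> real" where "Cf s = 4 / (1 - qf s)^2"

lemma qf_props: assumes "1/2 < s" shows "0 < qf s" "qf s < 1" "(qf s)^2 = (1/2) powr (2 * s - 1)"
proof -
  have "(1/2::real) powr (2 * s - 1) < (1/2) powr 0" using assms by (intro powr_less_mono') auto
  then have "(1/2::real) powr (2 * s - 1) < 1" by simp
  then show "0 < qf s" "qf s < 1" "(qf s)^2 = (1/2) powr (2 * s - 1)" unfolding qf_def by auto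
qed

lemma LINT_meas[measurable]:
  fixes y :: "real \<Rightarrow> 'a::euclidean_space \<Rightarrow> real"
  assumes Ym[measurable]: "(\<lambda>(\<tau>, x). y \<tau> x) \<in> borel_measurable (lborel \<Otimes>\<^sub>M lborel)"
    and S[measurable]: "S \<in> sets lborel"
  shows "(\<lambda>x. LINT \<tau>:S|lborel. y \<tau> x) \<in> borel_measurable lborel"
  unfolding set_lebesgue_integral_def
  by (rule lborel.borel_measurable_lebesgue_integral) measurable

lemma endpoint_frac:
  fixes y :: "real \<Rightarrow> 'a::euclidean_space \<Rightarrow> real"
  assumes Ym[measurable]: "(\<lambda>(\<tau>, x). y \<tau> x) \<in> borel_measurable (lborel \<Otimes>\<^sub>M lborel)"
    and Om[measurable]: "\<Omega> \<in> sets lborel"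
    and ab: "a < b" and s: "1/2 < s"
    and good: "AE x in lborel. x \<in> \<Omega> \<longrightarrow> set_integrable lborel {a..b} (\<lambda>\<tau>. y \<tau> x)"
    and cont: "\<forall>\<epsilon>>0. \<exists>\<delta>>0. \<forall>\<tau>\<in>{a..b}. b - \<tau> < \<delta> \<longrightarrow> (\<integral>\<^sup>+x. ennreal ((y \<tau> x - y b x)^2) * indicator \<Omega> x \<partial>lborel) \<le> ennreal \<epsilon>"
  shows "(\<integral>\<^sup>+x. ennreal (((1 / (b - a)) * (LINT \<tau>:{a..b}|lborel. y \<tau> x) - y b x)^2) * indicator \<Omega> x \<partial>lborel)
     \<le> ennreal (Cf s * (b - a) powr (2 * s - 1)) * Gag s a b \<Omega> y"
proof -
  define h where "h = b - a"
  define q where "q = qf s"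
  define e where "e = 2 * s - 1"
  have h: "0 < h" using ab h_def by simp
  have q: "0 < q" "q < 1" "q^2 = (1/2) powr e" using qf_props[OF s] q_def e_def by auto
  define hj where "hj j = h * (1/2)^j" for j :: nat
  define cj where "cj j = b - hj j" for j
  define A where "A j x = (1 / (b - cj j)) * (LINT \<tau>:{cj j..b}|lborel. y \<tau> x)" for j x
  define G where "G = Gag s a b \<Omega> y"
  have hj_pos: "0 < hj j" for j using h by (simp add: hj_def)
  have cj_ge: "a \<le> cj j" for j
  proof -
    have "hj j \<le> h" unfolding hj_def using h by (simp add: power_le_one mult_left_le)
    then show ?thesis unfolding cj_def h_def by simp
  qed
  have cj_lt: "cj j < b" for j using hj_pos[of j] by (simp add: cj_def)
  have cj0: "cj 0 = a" by (simp add: cj_def hj_def h_def)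
  have cjS: "cj (Suc j) = (cj j + b) / 2" for j by (simp add: cj_def hj_def field_simps)
  have hjpow: "hj j powr e = h powr e * (q^2)^j" for j
    unfolding hj_def q(3) using h by (simp add: powr_mult powr_pow_base)
  have Am: "(\<lambda>x. ennreal ((A j x - A i x)^2) * indicator \<Omega> x) \<in> borel_measurable lborel" for i j
    unfolding A_def using LINT_meas[OF Ym] by measurable
  have Am2: "(\<lambda>x. ennreal ((A j x - y b x)^2) * indicator \<Omega> x) \<in> borel_measurable lborel" for j
    unfolding A_def using LINT_meas[OF Ym] by measurable
  have stepb: "(\<integral>\<^sup>+x. ennreal ((A (Suc j) x - A j x)^2) * indicator \<Omega> x \<partial>lborel) \<le> ennreal (2 * h powr e * q^j * q^j) * G" for j
  proof -
    have "(\<integral>\<^sup>+x. ennreal ((A (Suc j) x - A j x)^2) * indicator \<Omega> x \<partial>lborel)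
       \<le> ennreal (2 * (b - cj j) powr (2 * s - 1)) * G"
      unfolding A_def cjS G_def
      using s by (intro step_int[OF Ym Om cj_ge cj_lt]) (auto intro: good)
    also have "(b - cj j) powr (2 * s - 1) = h powr e * q^j * q^j"
      unfolding e_def[symmetric] using hjpow[of j] by (simp add: cj_def power_mult_distrib[symmetric] power2_eq_square power_mult[symmetric] mult.assoc)
    finally show ?thesis by (simp add: mult.assoc)
  qed
  show ?thesis
  proof (rule ennreal_le_epsilon)
    fix \<epsilon> :: real assume "0 < \<epsilon>"
    then obtain \<delta> where \<delta>: "\<delta> > 0" and d: "\<forall>\<tau>\<in>{a..b}. b - \<tau> < \<delta> \<longrightarrow> (\<integral>\<^sup>+x. ennreal ((y \<tau> x - y b x)^2) * indicator \<Omega> x \<partial>lborel) \<le> ennreal (\<epsilon> / 2)"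
      using cont by (meson half_gt_zero)
    obtain n where n: "(1/2::real)^n < \<delta> / h" using real_arch_pow_inv[of "\<delta> / h" "1/2"] \<delta> h by auto
    have hn: "hj n < \<delta>" using n h unfolding hj_def by (simp add: field_simps)
    have Xb: "(\<integral>\<^sup>+x. ennreal ((A n x - y b x)^2) * indicator \<Omega> x \<partial>lborel) \<le> ennreal (\<epsilon> / 2)"
      unfolding A_def
    proof (rule cont_step[OF Ym Om cj_lt])
      show "0 \<le> \<epsilon> / 2" using \<open>0 < \<epsilon>\<close> by simp
      show "AE x in lborel. x \<in> \<Omega> \<longrightarrow> set_integrable lborel {cj n..b} (\<lambda>\<tau>. y \<tau> x)"
        using good by eventually_elim (use set_integrable_subint cj_ge in blast)
      show "\<forall>\<tau>\<in>{cj n..b}. (\<integral>\<^sup>+x. ennreal ((y \<tau> x - y b x)^2) * indicator \<Omega> x \<partial>lborel) \<le> ennreal (\<epsilon> / 2)"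
        using d cj_ge[of n] hn unfolding cj_def by auto
    qed
    define X where "X x = ennreal ((A n x - y b x)^2) * indicator \<Omega> x" for x
    define D where "D j x = ennreal ((A (Suc j) x - A j x)^2) * indicator \<Omega> x" for j x
    have Xm: "X \<in> borel_measurable lborel" unfolding X_def using Am2 by simp
    have Dm: "D j \<in> borel_measurable lborel" for j unfolding D_def using Am by simp
    have pw: "ennreal ((A 0 x - y b x)^2) * indicator \<Omega> x
        \<le> ennreal 2 * X x + ennreal (2 / (1 - q)) * (\<Sum>j<n. ennreal (1 / q^j) * D j x)" for x
    proof (cases "x \<in> \<Omega>")
      case True
      have "ennreal ((A 0 x - y b x)^2) \<le> ennreal (2 * (A n x - y b x)^2 + (2 / (1 - q)) * (\<Sum>j<n. (A (Suc j) x - A j x)^2 / q^j))"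
        by (rule ennreal_leI, rule telescope_bound) (use q in auto)
      also have "\<dots> = ennreal 2 * ennreal ((A n x - y b x)^2) + ennreal (2 / (1 - q)) * (\<Sum>j<n. ennreal (1 / q^j) * ennreal ((A (Suc j) x - A j x)^2))"
      proof -
        have S: "ennreal (\<Sum>j<n. (A (Suc j) x - A j x)^2 / q^j) = (\<Sum>j<n. ennreal (1 / q^j) * ennreal ((A (Suc j) x - A j x)^2))"
          using q by (subst sum_ennreal[symmetric]) (auto intro!: sum.cong simp: ennreal_mult[symmetric])
        have n2: "0 \<le> (\<Sum>j<n. (A (Suc j) x - A j x)^2 / q^j)" using q by (intro sum_nonneg) auto
        have n3: "0 \<le> 2 / (1 - q)" using q by simp
        have "ennreal (2 * (A n x - y b x)^2 + (2 / (1 - q)) * (\<Sum>j<n. (A (Suc j) x - A j x)^2 / q^j))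
           = ennreal (2 * (A n x - y b x)^2) + ennreal ((2 / (1 - q)) * (\<Sum>j<n. (A (Suc j) x - A j x)^2 / q^j))"
          using n2 n3 by (intro ennreal_plus) auto
        also have "ennreal (2 * (A n x - y b x)^2) = ennreal 2 * ennreal ((A n x - y b x)^2)"
          by (rule ennreal_mult) auto
        also have "ennreal ((2 / (1 - q)) * (\<Sum>j<n. (A (Suc j) x - A j x)^2 / q^j)) = ennreal (2 / (1 - q)) * ennreal (\<Sum>j<n. (A (Suc j) x - A j x)^2 / q^j)"
          by (rule ennreal_mult[OF n3 n2])
        finally show ?thesis unfolding S .
      qed
      finally show ?thesis using True by (simp add: X_def D_def)
    qed (simp add: X_def D_def)
    have "(\<integral>\<^sup>+x. ennreal (((1 / (b - a)) * (LINT \<tau>:{a..b}|lborel. y \<tau> x) - y b x)^2) * indicator \<Omega> x \<partial>lborel)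
       = (\<integral>\<^sup>+x. ennreal ((A 0 x - y b x)^2) * indicator \<Omega> x \<partial>lborel)"
      unfolding A_def cj0 ..
    also have "\<dots> \<le> (\<integral>\<^sup>+x. ennreal 2 * X x + ennreal (2 / (1 - q)) * (\<Sum>j<n. ennreal (1 / q^j) * D j x) \<partial>lborel)"
      by (intro nn_integral_mono pw)
    also have "\<dots> = ennreal 2 * (\<integral>\<^sup>+x. X x \<partial>lborel) + ennreal (2 / (1 - q)) * (\<Sum>j<n. ennreal (1 / q^j) * (\<integral>\<^sup>+x. D j x \<partial>lborel))"
      using Xm Dm by (simp add: nn_integral_add nn_integral_cmult nn_integral_sum)
    also have "\<dots> \<le> ennreal 2 * ennreal (\<epsilon> / 2) + ennreal (2 / (1 - q)) * (\<Sum>j<n. ennreal (1 / q^j) * (ennreal (2 * h powr e * q^j * q^j) * G))"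
      using Xb stepb unfolding X_def D_def
      by (intro add_mono mult_left_mono sum_mono) auto
    also have "(\<Sum>j<n. ennreal (1 / q^j) * (ennreal (2 * h powr e * q^j * q^j) * G)) = (\<Sum>j<n. ennreal (2 * h powr e * q^j)) * G"
      by (simp add: sum_distrib_right mult.assoc[symmetric] ennreal_mult[symmetric] q(1) less_imp_le del: sum_ennreal)
         (use q in \<open>intro sum.cong refl arg_cong2[where f="(*)"] arg_cong[where f=ennreal], simp add: field_simps\<close>)
    also have "(\<Sum>j<n. ennreal (2 * h powr e * q^j)) = ennreal (2 * h powr e * (\<Sum>j<n. q^j))"
      using q by (simp add: sum_distrib_left)
    also have "\<dots> \<le> ennreal (2 * h powr e * (1 / (1 - q)))"
      using q by (intro ennreal_leI mult_left_mono geom_le) auto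
    finally have "(\<integral>\<^sup>+x. ennreal (((1 / (b - a)) * (LINT \<tau>:{a..b}|lborel. y \<tau> x) - y b x)^2) * indicator \<Omega> x \<partial>lborel)
       \<le> ennreal 2 * ennreal (\<epsilon> / 2) + ennreal (2 / (1 - q)) * (ennreal (2 * h powr e * (1 / (1 - q))) * G)"
      by (simp add: mult_left_mono mult_right_mono add_left_mono)
    also have "\<dots> = ennreal \<epsilon> + ennreal (Cf s * (b - a) powr (2 * s - 1)) * G"
    proof -
      have e2: "ennreal 2 * ennreal (\<epsilon> / 2) = ennreal \<epsilon>" using \<open>0 < \<epsilon>\<close> by (subst ennreal_mult[symmetric]) auto
      have c2: "ennreal (2 / (1 - q)) * (ennreal (2 * h powr e * (1 / (1 - q))) * G) = ennreal (Cf s * (b - a) powr (2 * s - 1)) * G"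
        using q unfolding Cf_def q_def[symmetric] h_def[symmetric] e_def[symmetric]
        by (simp add: ennreal_mult[symmetric] mult.assoc[symmetric] power2_eq_square field_simps)
      show ?thesis unfolding e2 c2 ..
    qed
    finally show "(\<integral>\<^sup>+x. ennreal (((1 / (b - a)) * (LINT \<tau>:{a..b}|lborel. y \<tau> x) - y b x)^2) * indicator \<Omega> x \<partial>lborel)
       \<le> ennreal (Cf s * (b - a) powr (2 * s - 1)) * Gag s a b \<Omega> y + ennreal \<epsilon>"
      unfolding G_def by (simp add: add.commute)
  qed
qed

lemma LINT_diff_interval:
  fixes w :: "real \<Rightarrow> real"
  assumes wi: "set_integrable lborel {0..b} w" and t: "0 \<le> \<tau>" "\<tau> \<le> b"
  shows "(LINT \<sigma>:{0..b}|lborel. w \<sigma>) - (LINT \<sigma>:{0..\<tau>}|lborel. w \<sigma>) = (LINT \<sigma>:{\<tau><..b}|lborel. w \<sigma>)"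
proof -
  have wi2: "set_integrable lborel {0..\<tau>} w" using set_integrable_subint[OF wi] t by auto
  have wi3: "set_integrable lborel {\<tau><..b} w" by (rule set_integrable_subset[OF wi]) (use t in auto)
  have "(LINT \<sigma>:{0..b}|lborel. w \<sigma>) = (LINT \<sigma>:{0..\<tau>}|lborel. w \<sigma>) + (LINT \<sigma>:{\<tau><..b}|lborel. w \<sigma>)"
  proof -
    have "{0..b} = {0..\<tau>} \<union> {\<tau><..b}" using t by auto
    moreover have "{0..\<tau>} \<inter> {\<tau><..b} = {}" by auto
    ultimately show ?thesis using set_integral_Un[OF _ wi2 wi3] by simp
  qed
  then show ?thesis by simp
qed

lemma ennreal_sq_abs: "ennreal (x^2) = (ennreal \<bar>x\<bar>)^2" for x :: real
  by (simp add: ennreal_power)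

lemma endpoint_H1_pt:
  fixes f w :: "real \<Rightarrow> real" and fz a b :: real
  assumes fm[measurable]: "f \<in> borel_measurable lborel" and wm[measurable]: "w \<in> borel_measurable lborel"
    and a: "0 \<le> a" and ab: "a < b"
    and fi: "set_integrable lborel {a..b} f" and wi: "set_integrable lborel {0..b} w"
    and rep: "AE \<tau> in lborel. \<tau> \<in> {a..b} \<longrightarrow> f \<tau> = fz + (LINT \<sigma>:{0..\<tau>}|lborel. w \<sigma>)"
    and repb: "f b = fz + (LINT \<sigma>:{0..b}|lborel. w \<sigma>)"
  shows "ennreal (((1 / (b - a)) * (LINT \<tau>:{a..b}|lborel. f \<tau>) - f b)^2)
     \<le> ennreal (b - a) * (\<integral>\<^sup>+\<sigma>. ennreal ((w \<sigma>)^2) * indicator {a..b} \<sigma> \<partial>lborel)"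
proof -
  define Wn where "Wn = (\<integral>\<^sup>+\<sigma>. ennreal \<bar>w \<sigma>\<bar> * indicator {a..b} \<sigma> \<partial>lborel)"
  define J where "J = (LINT \<tau>:{a..b}|lborel. f \<tau> - f b)"
  have ci: "set_integrable lborel {a..b} (\<lambda>_. f b)" by (rule set_integrable_const_Icc)
  have "(LINT \<tau>:{a..b}|lborel. f \<tau> - f b) = (LINT \<tau>:{a..b}|lborel. f \<tau>) - (LINT \<tau>:{a..b}|lborel. f b)"
    using fi ci by simp
  also have "(LINT \<tau>:{a..b}|lborel. f b) = (b - a) * f b"
    using ab by (subst set_integral_const) auto
  finally have eq: "(1 / (b - a)) * (LINT \<tau>:{a..b}|lborel. f \<tau>) - f b = (1 / (b - a)) * J"
    unfolding J_def using ab by (simp add: field_simps)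
  have pt: "AE \<tau> in lborel. ennreal \<bar>f \<tau> - f b\<bar> * indicator {a..b} \<tau> \<le> Wn * indicator {a..b} \<tau>"
    using rep
  proof eventually_elim
    case (elim \<tau>)
    show ?case
    proof (cases "\<tau> \<in> {a..b}")
      case True
      then have "f \<tau> - f b = - ((LINT \<sigma>:{0..b}|lborel. w \<sigma>) - (LINT \<sigma>:{0..\<tau>}|lborel. w \<sigma>))"
        using elim repb by simp
      also have "\<dots> = - (LINT \<sigma>:{\<tau><..b}|lborel. w \<sigma>)"
        using True a by (subst LINT_diff_interval[OF wi]) auto
      finally have "ennreal \<bar>f \<tau> - f b\<bar> = ennreal \<bar>LINT \<sigma>:{\<tau><..b}|lborel. w \<sigma>\<bar>" by simp
      also have "\<dots> \<le> (\<integral>\<^sup>+\<sigma>. ennreal \<bar>w \<sigma>\<bar> * indicator {\<tau><..b} \<sigma> \<partial>lborel)"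
        by (rule abs_LINT_le) auto
      also have "\<dots> \<le> Wn"
        unfolding Wn_def using True by (intro nn_integral_mono) (auto simp: indicator_def)
      finally show ?thesis using True by simp
    qed simp
  qed
  have "ennreal \<bar>J\<bar> \<le> (\<integral>\<^sup>+\<tau>. ennreal \<bar>f \<tau> - f b\<bar> * indicator {a..b} \<tau> \<partial>lborel)"
    unfolding J_def by (rule abs_LINT_le) auto
  also have "\<dots> \<le> (\<integral>\<^sup>+\<tau>. Wn * indicator {a..b} \<tau> \<partial>lborel)"
    by (rule nn_integral_mono_AE[OF pt])
  also have "\<dots> = Wn * ennreal (b - a)"
    using ab by (subst nn_integral_cmult) auto
  finally have Jb: "ennreal \<bar>J\<bar> \<le> Wn * ennreal (b - a)" .
  have "ennreal \<bar>(1 / (b - a)) * J\<bar> = ennreal (1 / (b - a)) * ennreal \<bar>J\<bar>"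
    using ab by (simp add: ennreal_mult[symmetric] abs_mult)
  also have "\<dots> \<le> ennreal (1 / (b - a)) * (Wn * ennreal (b - a))"
    by (rule mult_left_mono[OF Jb]) simp
  also have "\<dots> = Wn"
    using ab by (simp add: ennreal_mult[symmetric] mult.commute mult.left_commute)
  finally have X: "ennreal \<bar>(1 / (b - a)) * J\<bar> \<le> Wn" .
  have "ennreal (((1 / (b - a)) * J)^2) = (ennreal \<bar>(1 / (b - a)) * J\<bar>)^2"
    by (rule ennreal_sq_abs)
  also have "\<dots> \<le> Wn^2" by (rule power_mono[OF X]) simp
  also have "\<dots> \<le> ennreal (b - a) * (\<integral>\<^sup>+\<sigma>. ennreal ((w \<sigma>)^2) * indicator {a..b} \<sigma> \<partial>lborel)"
    unfolding Wn_def using ab by (intro CS_interval) auto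
  finally show ?thesis unfolding eq .
qed

lemma endpoint_H1:
  fixes y w :: "real \<Rightarrow> 'a::euclidean_space \<Rightarrow> real"
  assumes Ym[measurable]: "(\<lambda>(\<tau>, x). y \<tau> x) \<in> borel_measurable (lborel \<Otimes>\<^sub>M lborel)"
    and Wm[measurable]: "(\<lambda>(\<tau>, x). w \<tau> x) \<in> borel_measurable (lborel \<Otimes>\<^sub>M lborel)"
    and Om[measurable]: "\<Omega> \<in> sets lborel"
    and a: "0 \<le> a" and ab: "a < b"
    and good: "AE x in lborel. x \<in> \<Omega> \<longrightarrow> set_integrable lborel {a..b} (\<lambda>\<tau>. y \<tau> x)"
    and goodw: "AE x in lborel. x \<in> \<Omega> \<longrightarrow> set_integrable lborel {0..b} (\<lambda>\<tau>. w \<tau> x)"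
    and rep: "AE x in lborel. x \<in> \<Omega> \<longrightarrow> (AE \<tau> in lborel. \<tau> \<in> {a..b} \<longrightarrow> y \<tau> x = y 0 x + (LINT \<sigma>:{0..\<tau>}|lborel. w \<sigma> x))"
    and repb: "AE x in lborel. x \<in> \<Omega> \<longrightarrow> y b x = y 0 x + (LINT \<sigma>:{0..b}|lborel. w \<sigma> x)"
  shows "(\<integral>\<^sup>+x. ennreal (((1 / (b - a)) * (LINT \<tau>:{a..b}|lborel. y \<tau> x) - y b x)^2) * indicator \<Omega> x \<partial>lborel)
     \<le> ennreal (b - a) * (\<integral>\<^sup>+t. (\<integral>\<^sup>+x. ennreal ((w t x)^2) * indicator \<Omega> x \<partial>lborel) * indicator {a..b} t \<partial>lborel)"
proof -
  define F where "F = (\<lambda>\<sigma> x. ennreal ((w \<sigma> x)^2) * indicator {a..b} \<sigma> * (indicator \<Omega> x :: ennreal))"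
  have Fm: "(\<lambda>(\<sigma>, x). F \<sigma> x) \<in> borel_measurable (lborel \<Otimes>\<^sub>M lborel)" unfolding F_def by measurable
  have ym: "(\<lambda>\<tau>. y \<tau> x) \<in> borel_measurable lborel" for x by measurable
  have wm: "(\<lambda>\<tau>. w \<tau> x) \<in> borel_measurable lborel" for x by measurable
  have "(\<integral>\<^sup>+x. ennreal (((1 / (b - a)) * (LINT \<tau>:{a..b}|lborel. y \<tau> x) - y b x)^2) * indicator \<Omega> x \<partial>lborel)
     \<le> (\<integral>\<^sup>+x. ennreal (b - a) * (\<integral>\<^sup>+\<sigma>. F \<sigma> x \<partial>lborel) \<partial>lborel)"
  proof (rule nn_integral_mono_AE)
    show "AE x in lborel. ennreal (((1 / (b - a)) * (LINT \<tau>:{a..b}|lborel. y \<tau> x) - y b x)^2) * indicator \<Omega> x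
       \<le> ennreal (b - a) * (\<integral>\<^sup>+\<sigma>. F \<sigma> x \<partial>lborel)"
      using good goodw rep repb
    proof eventually_elim
      case (elim x)
      show ?case
      proof (cases "x \<in> \<Omega>")
        case True
        have "ennreal (((1 / (b - a)) * (LINT \<tau>:{a..b}|lborel. y \<tau> x) - y b x)^2)
           \<le> ennreal (b - a) * (\<integral>\<^sup>+\<sigma>. ennreal ((w \<sigma> x)^2) * indicator {a..b} \<sigma> \<partial>lborel)"
          using True elim a ab by (intro endpoint_H1_pt[where fz = "y 0 x", OF ym wm]) auto
        also have "(\<integral>\<^sup>+\<sigma>. ennreal ((w \<sigma> x)^2) * indicator {a..b} \<sigma> \<partial>lborel) = (\<integral>\<^sup>+\<sigma>. F \<sigma> x \<partial>lborel)"
          unfolding F_def using True by simp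
        finally show ?thesis using True by simp
      qed (simp add: F_def)
    qed
  qed
  also have "\<dots> = ennreal (b - a) * (\<integral>\<^sup>+x. (\<integral>\<^sup>+\<sigma>. F \<sigma> x \<partial>lborel) \<partial>lborel)"
    by (rule nn_integral_cmult) (unfold F_def, measurable)
  also have "(\<integral>\<^sup>+x. (\<integral>\<^sup>+\<sigma>. F \<sigma> x \<partial>lborel) \<partial>lborel) = (\<integral>\<^sup>+\<sigma>. (\<integral>\<^sup>+x. F \<sigma> x \<partial>lborel) \<partial>lborel)"
    by (rule tonelli1[OF Fm])
  also have "\<dots> = (\<integral>\<^sup>+t. (\<integral>\<^sup>+x. ennreal ((w t x)^2) * indicator \<Omega> x \<partial>lborel) * indicator {a..b} t \<partial>lborel)"
  proof (intro nn_integral_cong)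
    fix t
    show "(\<integral>\<^sup>+x. F t x \<partial>lborel) = (\<integral>\<^sup>+x. ennreal ((w t x)^2) * indicator \<Omega> x \<partial>lborel) * indicator {a..b} t"
      unfolding F_def by (cases "t \<in> {a..b}") auto
  qed
  finally show ?thesis .
qed

lemma L2sq_lborel: "L2sq \<Omega> v = (\<integral>\<^sup>+x. ennreal ((v x)^2) * indicator \<Omega> x \<partial>lborel)"
  unfolding L2sq_def by (rule nn_integral_completion)

lemma nn_closed_open:
  fixes g :: "real \<Rightarrow> ennreal"
  shows "(\<integral>\<^sup>+t. g t * indicator {a..b} t \<partial>lborel) = (\<integral>\<^sup>+t. g t * indicator {a<..<b} t \<partial>lborel)"
proof (rule nn_integral_cong_AE)
  have "AE t in lborel. t \<noteq> a" "AE t in lborel. t \<noteq> b" by (rule AE_lborel_singleton)+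
  then show "AE t in lborel. g t * indicator {a..b} t = g t * indicator {a<..<b} t"
    by eventually_elim (auto simp: indicator_def)
qed

lemma L2L2_AE:
  fixes y :: "real \<Rightarrow> 'a::euclidean_space \<Rightarrow> real"
  assumes Ym[measurable]: "(\<lambda>(\<tau>, x). y \<tau> x) \<in> borel_measurable (lborel \<Otimes>\<^sub>M lborel)"
    and Om[measurable]: "\<Omega> \<in> sets lborel" and Jm[measurable]: "J \<in> sets lborel"
    and fin: "L2L2sq J \<Omega> y < \<infinity>"
  shows "AE x in lborel. x \<in> \<Omega> \<longrightarrow> (\<integral>\<^sup>+t. ennreal ((y t x)^2) * indicator J t \<partial>lborel) < \<infinity>"
proof -
  define F where "F = (\<lambda>t x. ennreal ((y t x)^2) * indicator J t * (indicator \<Omega> x :: ennreal))"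
  have Fm: "(\<lambda>(t, x). F t x) \<in> borel_measurable (lborel \<Otimes>\<^sub>M lborel)" unfolding F_def by measurable
  have "L2L2sq J \<Omega> y = (\<integral>\<^sup>+t. (\<integral>\<^sup>+x. F t x \<partial>lborel) \<partial>lborel)"
    unfolding L2L2sq_def L2sq_lborel F_def
    by (intro nn_integral_cong, subst nn_integral_multc[symmetric]) (measurable, simp add: ac_simps)
  also have "\<dots> = (\<integral>\<^sup>+x. (\<integral>\<^sup>+t. F t x \<partial>lborel) \<partial>lborel)"
    by (rule tonelli1[OF Fm, symmetric])
  finally have "(\<integral>\<^sup>+x. (\<integral>\<^sup>+t. F t x \<partial>lborel) \<partial>lborel) \<noteq> \<infinity>" using fin by simp
  then have "AE x in lborel. (\<integral>\<^sup>+t. F t x \<partial>lborel) \<noteq> \<infinity>"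
    by (intro nn_integral_PInf_AE) (unfold F_def, measurable)
  then show ?thesis
  proof eventually_elim
    case (elim x)
    show ?case
    proof
      assume "x \<in> \<Omega>"
      then have "(\<integral>\<^sup>+t. F t x \<partial>lborel) = (\<integral>\<^sup>+t. ennreal ((y t x)^2) * indicator J t \<partial>lborel)"
        unfolding F_def by simp
      then show "(\<integral>\<^sup>+t. ennreal ((y t x)^2) * indicator J t \<partial>lborel) < \<infinity>" using elim by (simp add: top.not_eq_extremum)
    qed
  qed
qed

lemma sqint_integrable:
  fixes f :: "real \<Rightarrow> real"
  assumes fm[measurable]: "f \<in> borel_measurable lborel"
    and fin: "(\<integral>\<^sup>+t. ennreal ((f t)^2) * indicator {0<..<T} t \<partial>lborel) < \<infinity>"
    and cd: "0 \<le> c" "c \<le> d" "d \<le> T"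
  shows "set_integrable lborel {c..d} f"
proof -
  have "(\<integral>\<^sup>+t. ennreal \<bar>f t\<bar> * indicator {c..d} t \<partial>lborel)^2
     \<le> ennreal (d - c) * (\<integral>\<^sup>+t. ennreal ((f t)^2) * indicator {c..d} t \<partial>lborel)"
    using cd by (intro CS_interval) auto
  also have "(\<integral>\<^sup>+t. ennreal ((f t)^2) * indicator {c..d} t \<partial>lborel) \<le> (\<integral>\<^sup>+t. ennreal ((f t)^2) * indicator {0..T} t \<partial>lborel)"
    using cd by (intro nn_integral_mono) (auto simp: indicator_def)
  also have "\<dots> = (\<integral>\<^sup>+t. ennreal ((f t)^2) * indicator {0<..<T} t \<partial>lborel)"
    by (rule nn_closed_open)
  finally have "(\<integral>\<^sup>+t. ennreal \<bar>f t\<bar> * indicator {c..d} t \<partial>lborel)^2 < \<infinity>"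
    using fin by (simp add: ennreal_mult_less_top mult_left_mono le_less_trans)
  then have "(\<integral>\<^sup>+t. ennreal \<bar>f t\<bar> * indicator {c..d} t \<partial>lborel) < \<infinity>"
    by (simp add: power_less_top_ennreal)
  moreover have "(\<integral>\<^sup>+t. ennreal (norm (indicator {c..d} t *\<^sub>R f t)) \<partial>lborel) = (\<integral>\<^sup>+t. ennreal \<bar>f t\<bar> * indicator {c..d} t \<partial>lborel)"
    by (intro nn_integral_cong) (auto simp: indicator_def)
  ultimately show ?thesis
    unfolding set_integrable_def
    by (subst integrable_iff_bounded) auto
qed

lemma ennreal_2sum: "0 \<le> a \<Longrightarrow> 0 \<le> b \<Longrightarrow> ennreal (2 * a + 2 * b) = ennreal 2 * ennreal a + ennreal 2 * ennreal b"
  by (subst ennreal_plus) (auto simp: ennreal_mult)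

lemma L2_diff_fin:
  fixes y :: "real \<Rightarrow> 'a::euclidean_space \<Rightarrow> real"
  assumes Ym[measurable]: "(\<lambda>(\<tau>, x). y \<tau> x) \<in> borel_measurable (lborel \<Otimes>\<^sub>M lborel)"
    and Om[measurable]: "\<Omega> \<in> sets lborel"
    and f1: "L2sq \<Omega> (y t) < \<infinity>" and f2: "L2sq \<Omega> (y u) < \<infinity>"
  shows "(\<integral>\<^sup>+x. ennreal ((y t x - y u x)^2) * indicator \<Omega> x \<partial>lborel) < \<infinity>"
proof -
  have "(\<integral>\<^sup>+x. ennreal ((y t x - y u x)^2) * indicator \<Omega> x \<partial>lborel)
     \<le> (\<integral>\<^sup>+x. ennreal 2 * (ennreal ((y t x)^2) * indicator \<Omega> x) + ennreal 2 * (ennreal ((y u x)^2) * indicator \<Omega> x) \<partial>lborel)"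
  proof (intro nn_integral_mono)
    fix x
    have "(y t x - y u x)^2 \<le> 2 * (y t x)^2 + 2 * (y u x)^2" using sq_ineq by simp
    then have "ennreal ((y t x - y u x)^2) \<le> ennreal (2 * (y t x)^2 + 2 * (y u x)^2)" by (rule ennreal_leI)
    also have "\<dots> = ennreal 2 * ennreal ((y t x)^2) + ennreal 2 * ennreal ((y u x)^2)"
      by (rule ennreal_2sum) auto
    finally show "ennreal ((y t x - y u x)^2) * indicator \<Omega> x \<le> ennreal 2 * (ennreal ((y t x)^2) * indicator \<Omega> x) + ennreal 2 * (ennreal ((y u x)^2) * indicator \<Omega> x)"
      by (cases "x \<in> \<Omega>") auto
  qed
  also have "\<dots> = ennreal 2 * L2sq \<Omega> (y t) + ennreal 2 * L2sq \<Omega> (y u)"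
  proof -
    have m1: "(\<lambda>x. ennreal ((y t x)^2) * indicator \<Omega> x) \<in> borel_measurable lborel" by measurable
    have m2: "(\<lambda>x. ennreal ((y u x)^2) * indicator \<Omega> x) \<in> borel_measurable lborel" by measurable
    show ?thesis unfolding L2sq_lborel
      using m1 m2 by (simp add: nn_integral_add nn_integral_cmult)
  qed
  also have "\<dots> < \<infinity>" using f1 f2 by (simp add: ennreal_mult_less_top)
  finally show ?thesis .
qed

lemma cont_conv:
  fixes y :: "real \<Rightarrow> 'a::euclidean_space \<Rightarrow> real"
  assumes Ym[measurable]: "(\<lambda>(\<tau>, x). y \<tau> x) \<in> borel_measurable (lborel \<Otimes>\<^sub>M lborel)"
    and Om[measurable]: "\<Omega> \<in> sets lborel"
    and fin: "\<forall>\<tau>\<in>{0..T}. L2sq \<Omega> (y \<tau>) < \<infinity>"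
    and tend: "((\<lambda>\<tau>. enn2real (L2sq \<Omega> (\<lambda>x. y \<tau> x - y b x))) \<longlongrightarrow> 0) (at b within {0..T})"
    and b: "b \<in> {0..T}" and a: "0 \<le> a"
  shows "\<forall>\<epsilon>>0. \<exists>\<delta>>0. \<forall>\<tau>\<in>{a..b}. b - \<tau> < \<delta> \<longrightarrow> (\<integral>\<^sup>+x. ennreal ((y \<tau> x - y b x)^2) * indicator \<Omega> x \<partial>lborel) \<le> ennreal \<epsilon>"
proof (intro allI impI)
  fix \<epsilon> :: real assume e: "0 < \<epsilon>"
  have "\<forall>\<^sub>F \<tau> in at b within {0..T}. dist (enn2real (L2sq \<Omega> (\<lambda>x. y \<tau> x - y b x))) 0 < \<epsilon>"
    using tend e by (rule tendstoD)
  then obtain \<delta> where d: "\<delta> > 0" and dd0: "\<forall>\<tau>\<in>{0..T}. \<tau> \<noteq> b \<and> dist \<tau> b < \<delta> \<longrightarrow> dist (enn2real (L2sq \<Omega> (\<lambda>x. y \<tau> x - y b x))) 0 < \<epsilon>"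
    unfolding eventually_at by (elim exE conjE) (rule that)
  have dd: "dist (enn2real (L2sq \<Omega> (\<lambda>x. y \<tau> x - y b x))) 0 < \<epsilon>" if "\<tau> \<in> {0..T}" "\<tau> \<noteq> b" "dist \<tau> b < \<delta>" for \<tau>
    using dd0 that by blast
  show "\<exists>\<delta>>0. \<forall>\<tau>\<in>{a..b}. b - \<tau> < \<delta> \<longrightarrow> (\<integral>\<^sup>+x. ennreal ((y \<tau> x - y b x)^2) * indicator \<Omega> x \<partial>lborel) \<le> ennreal \<epsilon>"
  proof (intro exI[of _ \<delta>] conjI ballI impI d)
    fix \<tau> assume t: "\<tau> \<in> {a..b}" and tb: "b - \<tau> < \<delta>"
    show "(\<integral>\<^sup>+x. ennreal ((y \<tau> x - y b x)^2) * indicator \<Omega> x \<partial>lborel) \<le> ennreal \<epsilon>"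
    proof (cases "\<tau> = b")
      case True then show ?thesis by simp
    next
      case False
      have t0: "\<tau> \<in> {0..T}" using t a b by auto
      have L: "L2sq \<Omega> (\<lambda>x. y \<tau> x - y b x) = (\<integral>\<^sup>+x. ennreal ((y \<tau> x - y b x)^2) * indicator \<Omega> x \<partial>lborel)"
        by (rule L2sq_lborel)
      have finL: "(\<integral>\<^sup>+x. ennreal ((y \<tau> x - y b x)^2) * indicator \<Omega> x \<partial>lborel) < \<infinity>"
        using fin t0 b by (intro L2_diff_fin[OF Ym Om]) auto
      have "dist (enn2real (L2sq \<Omega> (\<lambda>x. y \<tau> x - y b x))) 0 < \<epsilon>"
        using False t tb t0 by (intro dd) (auto simp: dist_real_def)
      then have "enn2real (\<integral>\<^sup>+x. ennreal ((y \<tau> x - y b x)^2) * indicator \<Omega> x \<partial>lborel) < \<epsilon>"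
        unfolding L by simp
      then have "ennreal (enn2real (\<integral>\<^sup>+x. ennreal ((y \<tau> x - y b x)^2) * indicator \<Omega> x \<partial>lborel)) \<le> ennreal \<epsilon>"
        by (intro ennreal_leI) simp
      then show ?thesis using finL by simp
    qed
  qed
qed

lemma mesh_mono:
  assumes tm: "time_mesh T M t \<kappa>" and ij: "i \<le> j" "j \<le> M"
  shows "t i \<le> t j"
  using ij
proof (induction j)
  case 0 then show ?case by simp
next
  case (Suc j)
  show ?case
  proof (cases "i = Suc j")
    case True then show ?thesis by simp
  next
    case False
    then have "t i \<le> t j" using Suc by simp
    moreover have "t j < t (Suc j)" using tm Suc.prems unfolding time_mesh_def by (metis atLeastAtMost_iff diff_Suc_1 le_add1 plus_1_eq_Suc)
    ultimately show ?thesis by simp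
  qed
qed

lemma mesh_range: assumes "time_mesh T M t \<kappa>" "m \<le> M" shows "0 \<le> t m" "t m \<le> T"
  using mesh_mono[OF assms(1), of 0 m] mesh_mono[OF assms(1), of m M] assms unfolding time_mesh_def by auto

lemma mesh_lt: assumes "time_mesh T M t \<kappa>" "1 \<le> m" "m \<le> M" shows "t (m - 1) < t m"
  using assms unfolding time_mesh_def by auto

lemma mesh_disj:
  assumes tm: "time_mesh T M t \<kappa>" and m: "m \<in> {1..M}" "m' \<in> {1..M}" "m \<noteq> m'"
  shows "{t (m - 1)<..<t m} \<inter> {t (m' - 1)<..<t m'} = {}"
proof -
  { fix i j assume "i \<in> {1..M}" "j \<in> {1..M}" "i < j"
    then have "t i \<le> t (j - 1)" using mesh_mono[OF tm, of i "j - 1"] by auto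
    then have "{t (i - 1)<..<t i} \<inter> {t (j - 1)<..<t j} = {}" by auto }
  note * = this
  show ?thesis
  proof (cases "m < m'")
    case True then show ?thesis using *[of m m'] m by auto
  next
    case False then have "m' < m" using m by simp
    then show ?thesis using *[of m' m] m by auto
  qed
qed

lemma mesh_sub: assumes tm: "time_mesh T M t \<kappa>" and m: "m \<in> {1..M}"
  shows "{t (m - 1)<..<t m} \<subseteq> {0<..<T}"
  using mesh_range[OF tm, of "m - 1"] mesh_range[OF tm, of m] m by fastforce

lemma sum_disj_ind:
  fixes I :: "nat \<Rightarrow> real set"
  assumes fin: "finite K" and disj: "\<And>m m'. m \<in> K \<Longrightarrow> m' \<in> K \<Longrightarrow> m \<noteq> m' \<Longrightarrow> I m \<inter> I m' = {}"
    and sub: "\<And>m. m \<in> K \<Longrightarrow> I m \<subseteq> S"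
  shows "(\<Sum>m\<in>K. (indicator (I m) u :: ennreal) * indicator (I m) v) \<le> indicator S u * indicator S v"
proof (cases "\<exists>m0\<in>K. u \<in> I m0 \<and> v \<in> I m0")
  case True
  then obtain m0 where m0: "m0 \<in> K" "u \<in> I m0" "v \<in> I m0" by blast
  have "(\<Sum>m\<in>K. (indicator (I m) u :: ennreal) * indicator (I m) v) = (indicator (I m0) u :: ennreal) * indicator (I m0) v"
  proof -
    have "(\<Sum>m\<in>K - {m0}. (indicator (I m) u :: ennreal) * indicator (I m) v) = 0"
      using disj m0 by (intro sum.neutral) (auto simp: indicator_def)
    then show ?thesis using sum.remove[OF fin m0(1), of "\<lambda>m. (indicator (I m) u :: ennreal) * indicator (I m) v"] by simp
  qed
  also have "\<dots> \<le> indicator S u * indicator S v"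
  proof -
    have "u \<in> S" "v \<in> S" using m0 sub[OF m0(1)] by auto
    then show ?thesis using m0 by simp
  qed
  finally show ?thesis .
next
  case False
  then have "(\<Sum>m\<in>K. (indicator (I m) u :: ennreal) * indicator (I m) v) = 0"
    by (intro sum.neutral) (auto simp: indicator_def)
  then show ?thesis by simp
qed

lemma double_closed_open:
  fixes F :: "real \<Rightarrow> real \<Rightarrow> ennreal"
  assumes Fm: "(\<lambda>(t, \<tau>). F t \<tau>) \<in> borel_measurable (lborel \<Otimes>\<^sub>M lborel)"
  shows "(\<integral>\<^sup>+t. \<integral>\<^sup>+\<tau>. F t \<tau> * indicator {a..b} \<tau> * indicator {a..b} t \<partial>lborel \<partial>lborel)
    = (\<integral>\<^sup>+t. \<integral>\<^sup>+\<tau>. F t \<tau> * (indicator {a<..<b} \<tau> * indicator {a<..<b} t) \<partial>lborel \<partial>lborel)"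
proof -
  have m1: "F t \<in> borel_measurable lborel" for t using measurable_Pair2[OF Fm, of t] by simp
  have m2: "(\<lambda>t. \<integral>\<^sup>+\<tau>. F t \<tau> * indicator {a<..<b} \<tau> \<partial>lborel) \<in> borel_measurable lborel"
    by (rule lborel.borel_measurable_nn_integral) (use Fm in measurable)
  have "(\<integral>\<^sup>+t. \<integral>\<^sup>+\<tau>. F t \<tau> * indicator {a..b} \<tau> * indicator {a..b} t \<partial>lborel \<partial>lborel)
     = (\<integral>\<^sup>+t. (\<integral>\<^sup>+\<tau>. F t \<tau> * indicator {a..b} \<tau> \<partial>lborel) * indicator {a..b} t \<partial>lborel)"
  proof (intro nn_integral_cong)
    fix t
    have "(\<lambda>\<tau>. F t \<tau> * indicator {a..b} \<tau>) \<in> borel_measurable lborel" using m1 by measurable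
    then show "(\<integral>\<^sup>+\<tau>. F t \<tau> * indicator {a..b} \<tau> * indicator {a..b} t \<partial>lborel) = (\<integral>\<^sup>+\<tau>. F t \<tau> * indicator {a..b} \<tau> \<partial>lborel) * indicator {a..b} t"
      by (rule nn_integral_multc)
  qed
  also have "\<dots> = (\<integral>\<^sup>+t. (\<integral>\<^sup>+\<tau>. F t \<tau> * indicator {a<..<b} \<tau> \<partial>lborel) * indicator {a..b} t \<partial>lborel)"
    by (simp only: nn_closed_open)
  also have "\<dots> = (\<integral>\<^sup>+t. (\<integral>\<^sup>+\<tau>. F t \<tau> * indicator {a<..<b} \<tau> \<partial>lborel) * indicator {a<..<b} t \<partial>lborel)"
    by (rule nn_closed_open)
  also have "\<dots> = (\<integral>\<^sup>+t. \<integral>\<^sup>+\<tau>. F t \<tau> * (indicator {a<..<b} \<tau> * indicator {a<..<b} t) \<partial>lborel \<partial>lborel)"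
  proof (intro nn_integral_cong)
    fix t
    have "(\<lambda>\<tau>. F t \<tau> * indicator {a<..<b} \<tau>) \<in> borel_measurable lborel" using m1 by measurable
    then have "(\<integral>\<^sup>+\<tau>. F t \<tau> * indicator {a<..<b} \<tau> * indicator {a<..<b} t \<partial>lborel) = (\<integral>\<^sup>+\<tau>. F t \<tau> * indicator {a<..<b} \<tau> \<partial>lborel) * indicator {a<..<b} t"
      by (rule nn_integral_multc)
    then show "(\<integral>\<^sup>+\<tau>. F t \<tau> * indicator {a<..<b} \<tau> \<partial>lborel) * indicator {a<..<b} t = (\<integral>\<^sup>+\<tau>. F t \<tau> * (indicator {a<..<b} \<tau> * indicator {a<..<b} t) \<partial>lborel)"
      by (simp add: mult.assoc)
  qed
  finally show ?thesis .
qed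

lemma gag_sum:
  fixes y :: "real \<Rightarrow> 'a::euclidean_space \<Rightarrow> real"
  assumes Ym[measurable]: "(\<lambda>(\<tau>, x). y \<tau> x) \<in> borel_measurable (lborel \<Otimes>\<^sub>M lborel)"
    and Om[measurable]: "\<Omega> \<in> sets lborel" and tm: "time_mesh T M t \<kappa>"
  shows "(\<Sum>m\<in>{1..M}. Gag s (t (m - 1)) (t m) \<Omega> y) \<le> gagliardo_sq s {0<..<T} \<Omega> y"
proof -
  define F where "F = (\<lambda>u \<tau>. ennreal (1 / \<bar>u - \<tau>\<bar> powr (1 + 2 * s)) * (\<integral>\<^sup>+x. ennreal ((y u x - y \<tau> x)^2) * indicator \<Omega> x \<partial>lborel))"
  have Fm: "(\<lambda>(u, \<tau>). F u \<tau>) \<in> borel_measurable (lborel \<Otimes>\<^sub>M lborel)" unfolding F_def by measurable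
  have Fm1: "F u \<in> borel_measurable lborel" for u using measurable_Pair2[OF Fm, of u] by simp
  have G: "Gag s (t (m - 1)) (t m) \<Omega> y = (\<integral>\<^sup>+u. \<integral>\<^sup>+\<tau>. F u \<tau> * (indicator {t (m - 1)<..<t m} \<tau> * indicator {t (m - 1)<..<t m} u) \<partial>lborel \<partial>lborel)" for m
  proof -
    have "Gag s (t (m - 1)) (t m) \<Omega> y = (\<integral>\<^sup>+u. \<integral>\<^sup>+\<tau>. F u \<tau> * indicator {t (m - 1)..t m} \<tau> * indicator {t (m - 1)..t m} u \<partial>lborel \<partial>lborel)"
      unfolding Gag_def F_def by simp
    then show ?thesis using double_closed_open[OF Fm] by simp
  qed
  have "(\<Sum>m\<in>{1..M}. Gag s (t (m - 1)) (t m) \<Omega> y)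
     = (\<integral>\<^sup>+u. \<integral>\<^sup>+\<tau>. (\<Sum>m\<in>{1..M}. F u \<tau> * (indicator {t (m - 1)<..<t m} \<tau> * indicator {t (m - 1)<..<t m} u)) \<partial>lborel \<partial>lborel)"
    unfolding G
    apply (subst nn_integral_sum[symmetric])
     apply (rule lborel.borel_measurable_nn_integral) using Fm apply measurable
    apply (intro nn_integral_cong)
    apply (subst nn_integral_sum[symmetric])
     using Fm1 apply measurable
    done
  also have "\<dots> \<le> (\<integral>\<^sup>+u. \<integral>\<^sup>+\<tau>. F u \<tau> * (indicator {0<..<T} \<tau> * indicator {0<..<T} u) \<partial>lborel \<partial>lborel)"
  proof (intro nn_integral_mono)
    fix u \<tau>
    have "(\<Sum>m\<in>{1..M}. F u \<tau> * (indicator {t (m - 1)<..<t m} \<tau> * indicator {t (m - 1)<..<t m} u))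
       = F u \<tau> * (\<Sum>m\<in>{1..M}. (indicator {t (m - 1)<..<t m} \<tau> :: ennreal) * indicator {t (m - 1)<..<t m} u)"
      by (rule sum_distrib_left[symmetric])
    also have "\<dots> \<le> F u \<tau> * (indicator {0<..<T} \<tau> * indicator {0<..<T} u)"
      by (intro mult_left_mono sum_disj_ind) (use mesh_disj[OF tm] mesh_sub[OF tm] in auto)
    finally show "(\<Sum>m\<in>{1..M}. F u \<tau> * (indicator {t (m - 1)<..<t m} \<tau> * indicator {t (m - 1)<..<t m} u))
       \<le> F u \<tau> * (indicator {0<..<T} \<tau> * indicator {0<..<T} u)" .
  qed
  also have "\<dots> = gagliardo_sq s {0<..<T} \<Omega> y"
    unfolding gagliardo_sq_def F_def L2sq_lborel by (simp add: mult.assoc)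
  finally show ?thesis .
qed

lemma h1_sum:
  fixes w :: "real \<Rightarrow> 'a::euclidean_space \<Rightarrow> real"
  assumes Wm[measurable]: "(\<lambda>(\<tau>, x). w \<tau> x) \<in> borel_measurable (lborel \<Otimes>\<^sub>M lborel)"
    and Om[measurable]: "\<Omega> \<in> sets lborel" and tm: "time_mesh T M t \<kappa>"
  shows "(\<Sum>m\<in>{1..M}. (\<integral>\<^sup>+u. (\<integral>\<^sup>+x. ennreal ((w u x)^2) * indicator \<Omega> x \<partial>lborel) * indicator {t (m - 1)..t m} u \<partial>lborel))
     \<le> L2L2sq {0<..<T} \<Omega> w"
proof -
  define F where "F = (\<lambda>u. (\<integral>\<^sup>+x. ennreal ((w u x)^2) * indicator \<Omega> x \<partial>lborel))"
  have Fm: "F \<in> borel_measurable lborel" unfolding F_def by measurable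
  have "(\<Sum>m\<in>{1..M}. (\<integral>\<^sup>+u. (\<integral>\<^sup>+x. ennreal ((w u x)^2) * indicator \<Omega> x \<partial>lborel) * indicator {t (m - 1)..t m} u \<partial>lborel))
     = (\<Sum>m\<in>{1..M}. (\<integral>\<^sup>+u. F u * indicator {t (m - 1)<..<t m} u \<partial>lborel))"
    by (simp only: nn_closed_open F_def)
  also have "\<dots> = (\<integral>\<^sup>+u. (\<Sum>m\<in>{1..M}. F u * indicator {t (m - 1)<..<t m} u) \<partial>lborel)"
    by (rule nn_integral_sum[symmetric]) (use Fm in measurable)
  also have "\<dots> \<le> (\<integral>\<^sup>+u. F u * indicator {0<..<T} u \<partial>lborel)"
  proof (intro nn_integral_mono)
    fix u
    have "(\<Sum>m\<in>{1..M}. F u * indicator {t (m - 1)<..<t m} u) = F u * (\<Sum>m\<in>{1..M}. (indicator {t (m - 1)<..<t m} u :: ennreal) * indicator {t (m - 1)<..<t m} u)"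
      unfolding sum_distrib_left by (intro sum.cong refl) (simp add: indicator_def)
    also have "\<dots> \<le> F u * (indicator {0<..<T} u * indicator {0<..<T} u)"
      by (intro mult_left_mono sum_disj_ind) (use mesh_disj[OF tm] mesh_sub[OF tm] in auto)
    also have "\<dots> = F u * indicator {0<..<T} u" by (simp add: indicator_def)
    finally show "(\<Sum>m\<in>{1..M}. F u * indicator {t (m - 1)<..<t m} u) \<le> F u * indicator {0<..<T} u" .
  qed
  also have "\<dots> = L2L2sq {0<..<T} \<Omega> w"
    unfolding L2L2sq_def L2sq_lborel F_def ..
  finally show ?thesis .
qed

lemma Z_meas:
  fixes w :: "real \<Rightarrow> 'a::euclidean_space \<Rightarrow> real"
  assumes Wm[measurable]: "(\<lambda>(\<tau>, x). w \<tau> x) \<in> borel_measurable (lborel \<Otimes>\<^sub>M lborel)"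
  shows "(\<lambda>(\<tau>, x). LINT \<sigma>:{0..\<tau>}|lborel. w \<sigma> x) \<in> borel_measurable (lborel \<Otimes>\<^sub>M lborel)"
proof -
  have eq: "(\<lambda>(\<tau>, x). LINT \<sigma>:{0..\<tau>}|lborel. w \<sigma> x) = (\<lambda>p. \<integral>\<sigma>. (if 0 \<le> \<sigma> \<and> \<sigma> \<le> fst p then w \<sigma> (snd p) else 0) \<partial>lborel)"
    by (auto simp: set_lebesgue_integral_def indicator_def fun_eq_iff intro!: Bochner_Integration.integral_cong)
  have "(\<lambda>(p, \<sigma>). if 0 \<le> \<sigma> \<and> \<sigma> \<le> fst p then w \<sigma> (snd p) else 0) \<in> borel_measurable ((lborel \<Otimes>\<^sub>M lborel) \<Otimes>\<^sub>M lborel)"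
    by measurable
  then have "(\<lambda>p. \<integral>\<sigma>. (if 0 \<le> \<sigma> \<and> \<sigma> \<le> fst p then w \<sigma> (snd p) else 0) \<partial>lborel) \<in> borel_measurable (lborel \<Otimes>\<^sub>M lborel)"
    by (rule lborel.borel_measurable_lebesgue_integral[where f = "\<lambda>p \<sigma>. if 0 \<le> \<sigma> \<and> \<sigma> \<le> fst p then w \<sigma> (snd p) else 0", simplified])
  then show ?thesis unfolding eq .
qed

lemma joint_rep:
  fixes y w :: "real \<Rightarrow> 'a::euclidean_space \<Rightarrow> real"
  assumes Ym[measurable]: "(\<lambda>(\<tau>, x). y \<tau> x) \<in> borel_measurable (lborel \<Otimes>\<^sub>M lborel)"
    and Wm[measurable]: "(\<lambda>(\<tau>, x). w \<tau> x) \<in> borel_measurable (lborel \<Otimes>\<^sub>M lborel)"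
    and Om[measurable]: "\<Omega> \<in> sets lborel"
    and wtd: "\<forall>t\<in>{0..T}. AE x in lebesgue. x \<in> \<Omega> \<longrightarrow> y t x = y 0 x + (LINT \<tau>:{0..t}|lborel. w \<tau> x)"
  shows "AE x in lborel. x \<in> \<Omega> \<longrightarrow> (AE \<tau> in lborel. \<tau> \<in> {0..T} \<longrightarrow> y \<tau> x = y 0 x + (LINT \<sigma>:{0..\<tau>}|lborel. w \<sigma> x))"
proof -
  define P where "P = (\<lambda>\<tau> x. \<tau> \<in> {0..T} \<and> x \<in> \<Omega> \<longrightarrow> y \<tau> x = y 0 x + (LINT \<sigma>:{0..\<tau>}|lborel. w \<sigma> x))"
  have Zm: "(\<lambda>(\<tau>, x). LINT \<sigma>:{0..\<tau>}|lborel. w \<sigma> x) \<in> borel_measurable (lborel \<Otimes>\<^sub>M lborel)"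
    by (rule Z_meas[OF Wm])
  have Zm': "(\<lambda>p. LINT \<sigma>:{0..fst p}|lborel. w \<sigma> (snd p)) \<in> borel_measurable (lborel \<Otimes>\<^sub>M lborel)"
    using Zm by (simp add: case_prod_beta')
  have y0m: "(\<lambda>p. y 0 (snd p)) \<in> borel_measurable (lborel \<Otimes>\<^sub>M lborel)" by measurable
  have Pm: "{p \<in> space (lborel \<Otimes>\<^sub>M lborel). P (fst p) (snd p)} \<in> sets (lborel \<Otimes>\<^sub>M lborel)"
    unfolding P_def using Zm' y0m by measurable
  have "AE \<tau> in lborel. AE x in lborel. P \<tau> x"
  proof (rule AE_I2)
    fix \<tau>
    show "AE x in lborel. P \<tau> x"
    proof (cases "\<tau> \<in> {0..T}")
      case True
      then have "AE x in lebesgue. x \<in> \<Omega> \<longrightarrow> y \<tau> x = y 0 x + (LINT \<sigma>:{0..\<tau>}|lborel. w \<sigma> x)" using wtd by auto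
      then have "AE x in lborel. x \<in> \<Omega> \<longrightarrow> y \<tau> x = y 0 x + (LINT \<sigma>:{0..\<tau>}|lborel. w \<sigma> x)"
        by (simp add: AE_completion_iff)
      then show ?thesis unfolding P_def by eventually_elim auto
    next
      case False then show ?thesis unfolding P_def by (intro AE_I2) auto
    qed
  qed
  then have "AE x in lborel. AE \<tau> in lborel. P \<tau> x"
    by (subst (asm) lborel_pair.AE_commute[OF Pm])
  then show ?thesis
    by eventually_elim (auto simp: P_def elim: eventually_mono)
qed

lemma powr_cancel: "0 < k \<Longrightarrow> k powr (1 - 2 * s) * k powr (2 * s - 1) = 1" for k s :: real
  by (simp add: powr_add[symmetric])

lemma powr_ratio:
  fixes k k' s :: real
  assumes k: "0 < k" "k \<le> k'" and s: "1/2 < s" "s \<le> 1"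
  shows "k powr (1 - 2 * s) * k' powr (2 * s - 1) \<le> k' / k"
proof -
  have "k powr (1 - 2 * s) = 1 / k powr (2 * s - 1)"
    using powr_minus_divide[of k "2 * s - 1"] by simp
  then have "k powr (1 - 2 * s) * k' powr (2 * s - 1) = (k' / k) powr (2 * s - 1)"
    using k by (simp add: powr_divide)
  also have "\<dots> \<le> (k' / k) powr 1" using k s by (intro powr_mono) auto
  also have "\<dots> = k' / k" using k by simp
  finally show ?thesis .
qed

lemma term_k:
  fixes k s :: real assumes "0 < k"
  shows "k powr (1 - (2 * s - 1)) * (2 / k^2) * k = 2 * k powr (1 - 2 * s)"
proof -
  have "k powr (1 - (2 * s - 1)) = k powr (1 - 2 * s) * k powr 1"
    by (subst powr_add[symmetric]) simp
  then show ?thesis using assms by (simp add: power2_eq_square field_simps)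
qed

lemma Pk_meas[measurable]:
  fixes y :: "real \<Rightarrow> 'a::euclidean_space \<Rightarrow> real"
  assumes Ym[measurable]: "(\<lambda>(\<tau>, x). y \<tau> x) \<in> borel_measurable (lborel \<Otimes>\<^sub>M lborel)"
  shows "(\<lambda>x. Pk t y m x) \<in> borel_measurable lborel"
proof (cases "m = 0")
  case True then show ?thesis unfolding Pk_def by simp
next
  case False then show ?thesis unfolding Pk_def using LINT_meas[OF Ym] by simp
qed

definition Eerr :: "(nat \<Rightarrow> real) \<Rightarrow> 'a::euclidean_space set \<Rightarrow> (real \<Rightarrow> 'a \<Rightarrow> real) \<Rightarrow> nat \<Rightarrow> ennreal" where
  "Eerr t \<Omega> y m = (\<integral>\<^sup>+x. ennreal ((Pk t y m x - y (t m) x)^2) * indicator \<Omega> x \<partial>lborel)"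

lemma Eerr0: "Eerr t \<Omega> y 0 = 0"
  unfolding Eerr_def Pk_def by simp

lemma term_bound:
  fixes y :: "real \<Rightarrow> 'a::euclidean_space \<Rightarrow> real"
  assumes Ym[measurable]: "(\<lambda>(\<tau>, x). y \<tau> x) \<in> borel_measurable (lborel \<Otimes>\<^sub>M lborel)"
    and Om[measurable]: "\<Omega> \<in> sets lborel"
    and k: "t (m - 1) < t m"
  shows "ennreal (mstep t m powr (1 - (2 * s - 1))) * L2L2sq {t (m - 1)<..t m} \<Omega> (\<lambda>_. gk t y m)
     \<le> ennreal (2 * mstep t m powr (1 - 2 * s)) * (Eerr t \<Omega> y m + Eerr t \<Omega> y (m - 1))"
proof -
  define k where "k = mstep t m"
  have kpos: "0 < k" using k by (simp add: k_def mstep_def)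
  define D where "D j x = Pk t y j x - y (t j) x" for j x
  have Dm: "(\<lambda>x. ennreal ((D j x)^2) * indicator \<Omega> x) \<in> borel_measurable lborel" for j
    unfolding D_def using Pk_meas[OF Ym] by measurable
  have g: "gk t y m x = (D m x - D (m - 1) x) / k" for x
    unfolding gk_def D_def k_def by (simp add: diff_divide_distrib)
  have "L2L2sq {t (m - 1)<..t m} \<Omega> (\<lambda>_. gk t y m) = L2sq \<Omega> (gk t y m) * ennreal k"
    unfolding L2L2sq_def using k
    by (subst mult.commute, subst nn_integral_cmult_indicator) (auto simp: k_def mstep_def mult.commute)
  also have "L2sq \<Omega> (gk t y m) \<le> (\<integral>\<^sup>+x. ennreal (2 / k^2) * (ennreal ((D m x)^2) * indicator \<Omega> x + ennreal ((D (m - 1) x)^2) * indicator \<Omega> x) \<partial>lborel)"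
    unfolding L2sq_lborel
  proof (intro nn_integral_mono)
    fix x
    have "(gk t y m x)^2 = (D m x - D (m - 1) x)^2 / k^2" unfolding g by (simp add: power_divide)
    also have "\<dots> \<le> (2 * (D m x)^2 + 2 * (D (m - 1) x)^2) / k^2"
      using kpos sq_ineq by (intro divide_right_mono) auto
    also have "\<dots> = (2 / k^2) * ((D m x)^2 + (D (m - 1) x)^2)" by (simp add: field_simps)
    finally have "ennreal ((gk t y m x)^2) \<le> ennreal ((2 / k^2) * ((D m x)^2 + (D (m - 1) x)^2))" by (rule ennreal_leI)
    also have "\<dots> = ennreal (2 / k^2) * (ennreal ((D m x)^2) + ennreal ((D (m - 1) x)^2))"
      by (subst ennreal_mult) (auto simp: ennreal_plus simp del: ennreal_plus[symmetric])
    finally show "ennreal ((gk t y m x)^2) * indicator \<Omega> x \<le> ennreal (2 / k^2) * (ennreal ((D m x)^2) * indicator \<Omega> x + ennreal ((D (m - 1) x)^2) * indicator \<Omega> x)"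
      by (cases "x \<in> \<Omega>") auto
  qed
  also have "\<dots> = ennreal (2 / k^2) * (Eerr t \<Omega> y m + Eerr t \<Omega> y (m - 1))"
    unfolding Eerr_def D_def[symmetric] using Dm by (simp add: nn_integral_cmult nn_integral_add)
  finally have L: "L2L2sq {t (m - 1)<..t m} \<Omega> (\<lambda>_. gk t y m) \<le> ennreal (2 / k^2) * (Eerr t \<Omega> y m + Eerr t \<Omega> y (m - 1)) * ennreal k"
    by (simp add: mult_right_mono)
  have "ennreal (k powr (1 - (2 * s - 1))) * L2L2sq {t (m - 1)<..t m} \<Omega> (\<lambda>_. gk t y m)
     \<le> ennreal (k powr (1 - (2 * s - 1))) * (ennreal (2 / k^2) * (Eerr t \<Omega> y m + Eerr t \<Omega> y (m - 1)) * ennreal k)"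
    by (rule mult_left_mono[OF L]) simp
  also have "\<dots> = ennreal (k powr (1 - (2 * s - 1)) * (2 / k^2) * k) * (Eerr t \<Omega> y m + Eerr t \<Omega> y (m - 1))"
  proof -
    have "ennreal (k powr (1 - (2 * s - 1))) * (ennreal (2 / k^2) * (Eerr t \<Omega> y m + Eerr t \<Omega> y (m - 1)) * ennreal k)
       = (ennreal (k powr (1 - (2 * s - 1))) * ennreal (2 / k^2) * ennreal k) * (Eerr t \<Omega> y m + Eerr t \<Omega> y (m - 1))"
      by (simp only: ac_simps)
    also have "ennreal (k powr (1 - (2 * s - 1))) * ennreal (2 / k^2) * ennreal k = ennreal (k powr (1 - (2 * s - 1)) * (2 / k^2) * k)"
      using kpos by (intro ennreal_mult3') auto
    finally show ?thesis .
  qed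
  also have "k powr (1 - (2 * s - 1)) * (2 / k^2) * k = 2 * k powr (1 - 2 * s)"
    by (rule term_k[OF kpos])
  finally show ?thesis unfolding k_def .
qed

lemma shift_sum:
  fixes G :: "nat \<Rightarrow> ennreal"
  shows "(\<Sum>m\<in>{1..M}. (if 2 \<le> m then G (m - 1) else 0)) = (\<Sum>m\<in>{1..<M}. G m)"
proof (induction M)
  case 0 then show ?case by simp
next
  case (Suc M)
  have "(\<Sum>m\<in>{1..Suc M}. (if 2 \<le> m then G (m - 1) else 0)) = (\<Sum>m\<in>{1..M}. (if 2 \<le> m then G (m - 1) else 0)) + (if 2 \<le> Suc M then G M else 0)"
    by simp
  also have "\<dots> = (\<Sum>m\<in>{1..<M}. G m) + (if 1 \<le> M then G M else 0)" using Suc by simp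
  also have "\<dots> = (\<Sum>m\<in>{1..<Suc M}. G m)" by (cases M) auto
  finally show ?case .
qed

lemma assemble:
  fixes E G :: "nat \<Rightarrow> ennreal" and k :: "nat \<Rightarrow> real"
  assumes kpos: "\<forall>m\<in>{1..M}. 0 < k m"
    and ratio: "\<forall>m\<in>{2..M}. k (m - 1) / k m \<le> \<kappa>' \<and> k m \<le> k (m - 1)"
    and E0: "E 0 = 0"
    and EG: "\<forall>m\<in>{1..M}. E m \<le> ennreal (c0 * k m powr (2 * s - 1)) * G m"
    and c0: "0 \<le> c0" and s: "1/2 < s" "s \<le> 1" and kap: "0 \<le> \<kappa>'"
  shows "(\<Sum>m\<in>{1..M}. ennreal (2 * k m powr (1 - 2 * s)) * (E m + E (m - 1)))
     \<le> ennreal (2 * c0 * (1 + \<kappa>')) * (\<Sum>m\<in>{1..M}. G m)"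
proof -
  have each: "ennreal (2 * k m powr (1 - 2 * s)) * (E m + E (m - 1))
     \<le> ennreal (2 * c0) * G m + ennreal (2 * c0 * \<kappa>') * (if 2 \<le> m then G (m - 1) else 0)"
    if m: "m \<in> {1..M}" for m
  proof -
    have km: "0 < k m" using kpos m by auto
    have A: "ennreal (2 * k m powr (1 - 2 * s)) * E m \<le> ennreal (2 * c0) * G m"
    proof -
      have "ennreal (2 * k m powr (1 - 2 * s)) * E m \<le> ennreal (2 * k m powr (1 - 2 * s)) * (ennreal (c0 * k m powr (2 * s - 1)) * G m)"
        using EG m by (intro mult_left_mono) auto
      also have "\<dots> = ennreal (2 * k m powr (1 - 2 * s) * (c0 * k m powr (2 * s - 1))) * G m"
        using c0 by (simp add: ennreal_mult mult.assoc)
      also have "2 * k m powr (1 - 2 * s) * (c0 * k m powr (2 * s - 1)) = 2 * c0"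
        using powr_cancel[OF km, of s] by (simp add: algebra_simps)
      finally show ?thesis .
    qed
    have B: "ennreal (2 * k m powr (1 - 2 * s)) * E (m - 1) \<le> ennreal (2 * c0 * \<kappa>') * (if 2 \<le> m then G (m - 1) else 0)"
    proof (cases "2 \<le> m")
      case False
      then have "m = 1" using m by auto
      then show ?thesis using E0 by simp
    next
      case True
      have m1: "m - 1 \<in> {1..M}" using True m by auto
      have km1: "k m \<le> k (m - 1)" and rk: "k (m - 1) / k m \<le> \<kappa>'" using ratio True m by auto
      have "ennreal (2 * k m powr (1 - 2 * s)) * E (m - 1) \<le> ennreal (2 * k m powr (1 - 2 * s)) * (ennreal (c0 * k (m - 1) powr (2 * s - 1)) * G (m - 1))"
        using EG m1 by (intro mult_left_mono) auto
      also have "\<dots> = ennreal (2 * c0 * (k m powr (1 - 2 * s) * k (m - 1) powr (2 * s - 1))) * G (m - 1)"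
        using c0 by (simp add: ennreal_mult[symmetric] ac_simps)
      also have "\<dots> \<le> ennreal (2 * c0 * \<kappa>') * G (m - 1)"
      proof (intro mult_right_mono ennreal_leI mult_left_mono)
        show "k m powr (1 - 2 * s) * k (m - 1) powr (2 * s - 1) \<le> \<kappa>'"
          using powr_ratio[OF km km1 s] rk by simp
      qed (use c0 in auto)
      finally show ?thesis using True by simp
    qed
    have "ennreal (2 * k m powr (1 - 2 * s)) * (E m + E (m - 1)) = ennreal (2 * k m powr (1 - 2 * s)) * E m + ennreal (2 * k m powr (1 - 2 * s)) * E (m - 1)"
      by (simp add: distrib_left)
    also have "\<dots> \<le> ennreal (2 * c0) * G m + ennreal (2 * c0 * \<kappa>') * (if 2 \<le> m then G (m - 1) else 0)"
      by (rule add_mono[OF A B])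
    finally show ?thesis .
  qed
  have "(\<Sum>m\<in>{1..M}. ennreal (2 * k m powr (1 - 2 * s)) * (E m + E (m - 1)))
     \<le> (\<Sum>m\<in>{1..M}. ennreal (2 * c0) * G m + ennreal (2 * c0 * \<kappa>') * (if 2 \<le> m then G (m - 1) else 0))"
    by (rule sum_mono[OF each])
  also have "\<dots> = ennreal (2 * c0) * (\<Sum>m\<in>{1..M}. G m) + ennreal (2 * c0 * \<kappa>') * (\<Sum>m\<in>{1..<M}. G m)"
    by (simp only: sum.distrib sum_distrib_left[symmetric] shift_sum)
  also have "\<dots> \<le> ennreal (2 * c0) * (\<Sum>m\<in>{1..M}. G m) + ennreal (2 * c0 * \<kappa>') * (\<Sum>m\<in>{1..M}. G m)"
    by (intro add_left_mono mult_left_mono sum_mono2) auto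
  also have "\<dots> = ennreal (2 * c0 * (1 + \<kappa>')) * (\<Sum>m\<in>{1..M}. G m)"
  proof -
    have "ennreal (2 * c0 * (1 + \<kappa>')) = ennreal (2 * c0) + ennreal (2 * c0 * \<kappa>')"
      using c0 kap by (subst ennreal_plus[symmetric]) (auto simp: algebra_simps)
    then show ?thesis by (simp add: distrib_right)
  qed
  finally show ?thesis .
qed

lemma INF_bound:
  fixes X :: ennreal and f :: "'b \<Rightarrow> ennreal"
  assumes all: "\<And>w. w \<in> S \<Longrightarrow> X \<le> ennreal C * f w" and C: "0 < C"
  shows "X \<le> ennreal C * (INF w\<in>S. f w)"
proof -
  have inv: "ennreal C * ennreal (1 / C) = 1" using C by (simp add: ennreal_mult[symmetric])
  have "X * ennreal (1 / C) \<le> (INF w\<in>S. f w)"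
  proof (rule INF_greatest)
    fix w assume "w \<in> S"
    then have "X * ennreal (1 / C) \<le> ennreal C * f w * ennreal (1 / C)"
      using all by (intro mult_right_mono) auto
    also have "\<dots> = f w * (ennreal C * ennreal (1 / C))" by (simp only: ac_simps)
    also have "\<dots> = f w" using inv by simp
    finally show "X * ennreal (1 / C) \<le> f w" .
  qed
  then have "X * ennreal (1 / C) * ennreal C \<le> (INF w\<in>S. f w) * ennreal C" by (rule mult_right_mono) simp
  moreover have "X * ennreal (1 / C) * ennreal C = X * (ennreal C * ennreal (1 / C))" by (simp only: ac_simps)
  then have "X * ennreal (1 / C) * ennreal C = X" using inv by simp
  ultimately show ?thesis by (simp add: ac_simps)
qed

lemma mesh_ratio:
  assumes tm: "time_mesh T M t \<kappa>" and m: "m \<in> {2..M}"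
  shows "mstep t (m - 1) / mstep t m \<le> \<bar>\<kappa>\<bar>" "mstep t m \<le> mstep t (m - 1)"
proof -
  have pos: "0 < mstep t m" using tm m unfolding time_mesh_def mstep_def by auto
  have "m - 1 \<in> {1..M}" using m by auto
  then have "mstep t (m - 1) \<le> Max (mstep t ` {1..M})" by (intro Max_ge) auto
  then have "mstep t (m - 1) / mstep t m \<le> Max (mstep t ` {1..M}) / mstep t m"
    using pos by (intro divide_right_mono) auto
  also have "\<dots> \<le> \<kappa>" using tm m unfolding time_mesh_def by auto
  finally show "mstep t (m - 1) / mstep t m \<le> \<bar>\<kappa>\<bar>" by simp
  show "mstep t m \<le> mstep t (m - 1)" using tm m unfolding time_mesh_def by auto
qed

lemma Eerr_eq:
  assumes "m \<noteq> 0"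
  shows "Eerr t \<Omega> y m = (\<integral>\<^sup>+x. ennreal (((1 / (t m - t (m - 1))) * (LINT \<tau>:{t (m - 1)..t m}|lborel. y \<tau> x) - y (t m) x)^2) * indicator \<Omega> x \<partial>lborel)"
  unfolding Eerr_def Pk_def mstep_def using assms by simp

theorem lemma5p1:
  fixes \<Omega> :: "'a::euclidean_space set" and s T \<kappa> :: real
  assumes "DIM('a) \<in> {2, 3}" and "bounded \<Omega>" and "open \<Omega>"
    and "1 / 2 < s" and "s \<le> 1" and "0 < T"
  shows "\<exists>C. \<forall>M t (y :: real \<Rightarrow> 'a \<Rightarrow> real).
           time_mesh T M t \<kappa> \<and>
           (\<lambda>(\<tau>, x). y \<tau> x) \<in> borel_measurable (lborel \<Otimes>\<^sub>M lborel) \<and>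
           (\<forall>\<tau>\<in>{0..T}. L2sq \<Omega> (y \<tau>) < \<infinity>) \<and>
           (\<forall>\<tau>0\<in>{0..T}. ((\<lambda>\<tau>. enn2real (L2sq \<Omega> (\<lambda>x. y \<tau> x - y \<tau>0 x))) \<longlongrightarrow> 0) (at \<tau>0 within {0..T})) \<and>
           Hs_sq s T \<Omega> y < \<infinity>
           \<longrightarrow> (\<Sum>m = 1..M. ennreal (mstep t m powr (1 - (2 * s - 1))) * L2L2sq {t (m - 1)<..t m} \<Omega> (\<lambda>_. gk t y m))
               \<le> ennreal C * Hs_sq s T \<Omega> y"
proof -
  note s = assms(4,5)
  have Om[measurable]: "\<Omega> \<in> sets lborel" using assms(3) by (simp add: borel_open)
  define c0 where "c0 = Cf s + 1"
  have Cf_pos: "0 \<le> Cf s" unfolding Cf_def by simp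
  have c0: "0 \<le> c0" "Cf s \<le> c0" "1 \<le> c0" unfolding c0_def using Cf_pos by auto
  define C where "C = 2 * c0 * (1 + \<bar>\<kappa>\<bar>)"
  have Cpos: "0 < C" unfolding C_def using c0 by (simp add: add_pos_nonneg)
  show ?thesis
  proof (intro exI[of _ C] allI impI)
    fix M t and y :: "real \<Rightarrow> 'a \<Rightarrow> real"
    assume H: "time_mesh T M t \<kappa> \<and>
           (\<lambda>(\<tau>, x). y \<tau> x) \<in> borel_measurable (lborel \<Otimes>\<^sub>M lborel) \<and>
           (\<forall>\<tau>\<in>{0..T}. L2sq \<Omega> (y \<tau>) < \<infinity>) \<and>
           (\<forall>\<tau>0\<in>{0..T}. ((\<lambda>\<tau>. enn2real (L2sq \<Omega> (\<lambda>x. y \<tau> x - y \<tau>0 x))) \<longlongrightarrow> 0) (at \<tau>0 within {0..T})) \<and>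
           Hs_sq s T \<Omega> y < \<infinity>"
    then have tm: "time_mesh T M t \<kappa>"
      and Ym[measurable]: "(\<lambda>(\<tau>, x). y \<tau> x) \<in> borel_measurable (lborel \<Otimes>\<^sub>M lborel)"
      and fin: "\<forall>\<tau>\<in>{0..T}. L2sq \<Omega> (y \<tau>) < \<infinity>"
      and cont: "\<forall>\<tau>0\<in>{0..T}. ((\<lambda>\<tau>. enn2real (L2sq \<Omega> (\<lambda>x. y \<tau> x - y \<tau>0 x))) \<longlongrightarrow> 0) (at \<tau>0 within {0..T})"
      and Hfin: "Hs_sq s T \<Omega> y < \<infinity>" by auto
    have ym: "(\<lambda>\<tau>. y \<tau> x) \<in> borel_measurable lborel" for x by measurable
    have L2y: "L2L2sq {0<..<T} \<Omega> y < \<infinity>"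
      using Hfin unfolding Hs_sq_def by (auto split: if_splits)
    have goody0: "AE x in lborel. x \<in> \<Omega> \<longrightarrow> (\<integral>\<^sup>+t. ennreal ((y t x)^2) * indicator {0<..<T} t \<partial>lborel) < \<infinity>"
      by (rule L2L2_AE[OF Ym Om _ L2y]) simp
    have goody: "AE x in lborel. x \<in> \<Omega> \<longrightarrow> set_integrable lborel {a..b} (\<lambda>\<tau>. y \<tau> x)"
      if "0 \<le> a" "a \<le> b" "b \<le> T" for a b
      using goody0 by eventually_elim (use that in \<open>auto intro: sqint_integrable[OF ym]\<close>)
    define k where "k m = mstep t m" for m
    have kpos: "\<forall>m\<in>{1..M}. 0 < k m" using tm unfolding time_mesh_def k_def mstep_def by auto
    have ratio: "\<forall>m\<in>{2..M}. k (m - 1) / k m \<le> \<bar>\<kappa>\<bar> \<and> k m \<le> k (m - 1)"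
      using mesh_ratio[OF tm] unfolding k_def by auto
    have tlt: "t (m - 1) < t m" if "m \<in> {1..M}" for m using mesh_lt[OF tm] that by auto
    have trange: "0 \<le> t m" "t m \<le> T" if "m \<le> M" for m using mesh_range[OF tm that] by auto
    have LHS: "(\<Sum>m = 1..M. ennreal (mstep t m powr (1 - (2 * s - 1))) * L2L2sq {t (m - 1)<..t m} \<Omega> (\<lambda>_. gk t y m))
       \<le> (\<Sum>m\<in>{1..M}. ennreal (2 * k m powr (1 - 2 * s)) * (Eerr t \<Omega> y m + Eerr t \<Omega> y (m - 1)))"
      unfolding k_def by (intro sum_mono term_bound[OF Ym Om] tlt)
    show "(\<Sum>m = 1..M. ennreal (mstep t m powr (1 - (2 * s - 1))) * L2L2sq {t (m - 1)<..t m} \<Omega> (\<lambda>_. gk t y m))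
               \<le> ennreal C * Hs_sq s T \<Omega> y"
    proof (cases "s < 1")
      case True
      have EG: "\<forall>m\<in>{1..M}. Eerr t \<Omega> y m \<le> ennreal (c0 * k m powr (2 * s - 1)) * Gag s (t (m - 1)) (t m) \<Omega> y"
      proof
        fix m assume m: "m \<in> {1..M}"
        have a0: "0 \<le> t (m - 1)" and bT: "t m \<le> T" using trange m by auto
        have mnz: "m \<noteq> 0" using m by auto
        have "Eerr t \<Omega> y m \<le> ennreal (Cf s * (t m - t (m - 1)) powr (2 * s - 1)) * Gag s (t (m - 1)) (t m) \<Omega> y"
          unfolding Eerr_eq[OF mnz]
        proof (intro endpoint_frac[OF Ym Om tlt[OF m] s(1)])
          show "AE x in lborel. x \<in> \<Omega> \<longrightarrow> set_integrable lborel {t (m - 1)..t m} (\<lambda>\<tau>. y \<tau> x)"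
            using goody a0 bT tlt[OF m] by auto
          show "\<forall>\<epsilon>>0. \<exists>\<delta>>0. \<forall>\<tau>\<in>{t (m - 1)..t m}. t m - \<tau> < \<delta> \<longrightarrow> (\<integral>\<^sup>+x. ennreal ((y \<tau> x - y (t m) x)^2) * indicator \<Omega> x \<partial>lborel) \<le> ennreal \<epsilon>"
            using cont a0 bT trange[of m] m by (intro cont_conv[OF Ym Om fin]) auto
        qed
        also have "\<dots> \<le> ennreal (c0 * k m powr (2 * s - 1)) * Gag s (t (m - 1)) (t m) \<Omega> y"
          unfolding k_def mstep_def using c0 by (intro mult_right_mono ennreal_leI mult_right_mono) auto
        finally show "Eerr t \<Omega> y m \<le> ennreal (c0 * k m powr (2 * s - 1)) * Gag s (t (m - 1)) (t m) \<Omega> y" .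
      qed
      have "(\<Sum>m\<in>{1..M}. ennreal (2 * k m powr (1 - 2 * s)) * (Eerr t \<Omega> y m + Eerr t \<Omega> y (m - 1)))
         \<le> ennreal (2 * c0 * (1 + \<bar>\<kappa>\<bar>)) * (\<Sum>m\<in>{1..M}. Gag s (t (m - 1)) (t m) \<Omega> y)"
        by (rule assemble[OF kpos ratio Eerr0 EG c0(1) s]) simp
      also have "\<dots> \<le> ennreal C * gagliardo_sq s {0<..<T} \<Omega> y"
        unfolding C_def by (intro mult_left_mono gag_sum[OF Ym Om tm]) simp
      also have "\<dots> \<le> ennreal C * Hs_sq s T \<Omega> y"
        unfolding Hs_sq_def using True by (intro mult_left_mono) auto
      finally show ?thesis using LHS by simp
    next
      case False
      then have s1: "s = 1" using s by simp
      have "(\<Sum>m = 1..M. ennreal (mstep t m powr (1 - (2 * s - 1))) * L2L2sq {t (m - 1)<..t m} \<Omega> (\<lambda>_. gk t y m))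
        \<le> ennreal C * (INF w\<in>{w. weak_time_deriv 0 T \<Omega> y w}. L2L2sq {0<..<T} \<Omega> w)"
      proof (rule INF_bound[OF _ Cpos])
        fix w assume "w \<in> {w. weak_time_deriv 0 T \<Omega> y w}"
        then have wd: "weak_time_deriv 0 T \<Omega> y w" by (rule CollectD)
        have Wm[measurable]: "(\<lambda>(\<tau>, x). w \<tau> x) \<in> borel_measurable (lborel \<Otimes>\<^sub>M lborel)"
          using wd unfolding weak_time_deriv_def by (rule conjunct1)
        have wtd: "\<forall>t\<in>{0..T}. AE x in lebesgue. x \<in> \<Omega> \<longrightarrow> y t x = y 0 x + (LINT \<tau>:{0..t}|lborel. w \<tau> x)"
          using wd unfolding weak_time_deriv_def by (rule conjunct2)
        have wm: "(\<lambda>\<tau>. w \<tau> x) \<in> borel_measurable lborel" for x by measurable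
        show "(\<Sum>m = 1..M. ennreal (mstep t m powr (1 - (2 * s - 1))) * L2L2sq {t (m - 1)<..t m} \<Omega> (\<lambda>_. gk t y m))
           \<le> ennreal C * L2L2sq {0<..<T} \<Omega> w"
        proof (cases "L2L2sq {0<..<T} \<Omega> w < \<infinity>")
          case False
          then have "L2L2sq {0<..<T} \<Omega> w = \<infinity>" by (simp add: less_top[symmetric])
          moreover have "ennreal C * \<infinity> = \<infinity>" using Cpos by (simp add: ennreal_mult_top)
          ultimately show ?thesis by simp
        next
          case True
          have goodw0: "AE x in lborel. x \<in> \<Omega> \<longrightarrow> (\<integral>\<^sup>+t. ennreal ((w t x)^2) * indicator {0<..<T} t \<partial>lborel) < \<infinity>"
            by (rule L2L2_AE[OF Wm Om _ True]) simp
          have rep: "AE x in lborel. x \<in> \<Omega> \<longrightarrow> (AE \<tau> in lborel. \<tau> \<in> {0..T} \<longrightarrow> y \<tau> x = y 0 x + (LINT \<sigma>:{0..\<tau>}|lborel. w \<sigma> x))"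
            by (rule joint_rep[OF Ym Wm Om wtd])
          define G where "G m = (\<integral>\<^sup>+u. (\<integral>\<^sup>+x. ennreal ((w u x)^2) * indicator \<Omega> x \<partial>lborel) * indicator {t (m - 1)..t m} u \<partial>lborel)" for m
          have EG: "\<forall>m\<in>{1..M}. Eerr t \<Omega> y m \<le> ennreal (c0 * k m powr (2 * s - 1)) * G m"
          proof
            fix m assume m: "m \<in> {1..M}"
            have a0: "0 \<le> t (m - 1)" and bT: "t m \<le> T" using trange m by auto
            have mnz: "m \<noteq> 0" using m by auto
            have "Eerr t \<Omega> y m \<le> ennreal (t m - t (m - 1)) * G m"
              unfolding Eerr_eq[OF mnz] G_def
            proof (intro endpoint_H1[OF Ym Wm Om a0 tlt[OF m]])
              show "AE x in lborel. x \<in> \<Omega> \<longrightarrow> set_integrable lborel {t (m - 1)..t m} (\<lambda>\<tau>. y \<tau> x)"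
                using goody a0 bT tlt[OF m] by auto
              show "AE x in lborel. x \<in> \<Omega> \<longrightarrow> set_integrable lborel {0..t m} (\<lambda>\<tau>. w \<tau> x)"
                using goodw0
              proof eventually_elim
                case (elim x)
                show ?case
                proof
                  assume "x \<in> \<Omega>"
                  then have "(\<integral>\<^sup>+t. ennreal ((w t x)^2) * indicator {0<..<T} t \<partial>lborel) < \<infinity>" using elim by simp
                  moreover have "0 \<le> t m" using a0 tlt[OF m] by simp
                  ultimately show "set_integrable lborel {0..t m} (\<lambda>\<tau>. w \<tau> x)"
                    using bT by (intro sqint_integrable[OF wm]) simp_all
                qed
              qed
              show "AE x in lborel. x \<in> \<Omega> \<longrightarrow> (AE \<tau> in lborel. \<tau> \<in> {t (m - 1)..t m} \<longrightarrow> y \<tau> x = y 0 x + (LINT \<sigma>:{0..\<tau>}|lborel. w \<sigma> x))"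
                using rep
              proof eventually_elim
                case (elim x)
                show ?case
                proof
                  assume "x \<in> \<Omega>"
                  then have "AE \<tau> in lborel. \<tau> \<in> {0..T} \<longrightarrow> y \<tau> x = y 0 x + (LINT \<sigma>:{0..\<tau>}|lborel. w \<sigma> x)" using elim by simp
                  then show "AE \<tau> in lborel. \<tau> \<in> {t (m - 1)..t m} \<longrightarrow> y \<tau> x = y 0 x + (LINT \<sigma>:{0..\<tau>}|lborel. w \<sigma> x)"
                  proof (rule eventually_mono)
                    fix \<tau> assume "\<tau> \<in> {0..T} \<longrightarrow> y \<tau> x = y 0 x + (LINT \<sigma>:{0..\<tau>}|lborel. w \<sigma> x)"
                    moreover have "{t (m - 1)..t m} \<subseteq> {0..T}" using a0 bT by auto
                    ultimately show "\<tau> \<in> {t (m - 1)..t m} \<longrightarrow> y \<tau> x = y 0 x + (LINT \<sigma>:{0..\<tau>}|lborel. w \<sigma> x)" by blast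
                  qed
                qed
              qed
              have "t m \<in> {0..T}" using a0 bT tlt[OF m] by auto
              then have "AE x in lebesgue. x \<in> \<Omega> \<longrightarrow> y (t m) x = y 0 x + (LINT \<sigma>:{0..t m}|lborel. w \<sigma> x)"
                using wtd by auto
              then show "AE x in lborel. x \<in> \<Omega> \<longrightarrow> y (t m) x = y 0 x + (LINT \<sigma>:{0..t m}|lborel. w \<sigma> x)"
                by (simp add: AE_completion_iff)
            qed
            also have "\<dots> \<le> ennreal (c0 * k m powr (2 * s - 1)) * G m"
            proof (intro mult_right_mono ennreal_leI)
              have xpos: "0 < t m - t (m - 1)" using tlt[OF m] by simp
              have "k m powr (2 * s - 1) = t m - t (m - 1)" unfolding k_def mstep_def s1 using xpos by simp
              moreover have "1 * (t m - t (m - 1)) \<le> c0 * (t m - t (m - 1))" using c0 xpos by (intro mult_right_mono) auto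
              ultimately show "t m - t (m - 1) \<le> c0 * k m powr (2 * s - 1)" by simp
            qed simp
            finally show "Eerr t \<Omega> y m \<le> ennreal (c0 * k m powr (2 * s - 1)) * G m" .
          qed
          have "(\<Sum>m\<in>{1..M}. ennreal (2 * k m powr (1 - 2 * s)) * (Eerr t \<Omega> y m + Eerr t \<Omega> y (m - 1)))
             \<le> ennreal (2 * c0 * (1 + \<bar>\<kappa>\<bar>)) * (\<Sum>m\<in>{1..M}. G m)"
            by (rule assemble[OF kpos ratio Eerr0 EG c0(1) s]) simp
          also have "\<dots> \<le> ennreal C * L2L2sq {0<..<T} \<Omega> w"
            unfolding C_def G_def by (intro mult_left_mono h1_sum[OF Wm Om tm]) simp
          finally show ?thesis using LHS by simp
        qed
      qed
      also have "\<dots> \<le> ennreal C * Hs_sq s T \<Omega> y"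
        unfolding Hs_sq_def using s1 by (intro mult_left_mono) auto
      finally show ?thesis .
    qed
  qed
qed


end
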